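(* Under the hypotheses of the preceding lemma (a defining map $s_\alpha$ for $\Lambda\subset(M,g)$, $m\in\mathbb Z_{\ge2}$, $G_{\alpha\beta}=\delta_{\alpha\beta}+\mathcal O(s^2)$, and $n^{a_1\cdots a_{n-1}}_{(\alpha_1\cdots\alpha_{n-1}}\nabla_{a_1\cdots a_{n-1}b}G_{\gamma\delta)}=0=n^{a_1\cdots a_n}_{(\alpha_1\cdots\alpha_n}\nabla_{a_1\cdots a_n}G_{\gamma)\delta}$ on $\Lambda$ for all $2\le n\le m$), for every $1\le p\le m$ we have on $\Lambda$ $$n^{a_1\cdots a_p}_{(\alpha_1\cdots\alpha_p}\nabla_{a_1\cdots a_p}n^b_{\beta)}=0.$$
   Context: $(M,g)$ Riemannian with Levi-Civita connection $\nabla$. A defining map is a $k$-tuple $s_\alpha$ vanishing exactly on $\Lambda$ with independent differentials there; $n_{a\alpha}:=\nabla_as_\alpha$; $G_{\alpha\beta}=g^{ab}\nabla_as_\alpha\nabla_bs_\beta$; $\mathcal O(s^2)$ = finite sum of terms $s_\gamma s_\delta T$ with $T$ smooth. Notation: $n^{a_1\cdots a_n}_{\alpha_1\cdots\alpha_n}:=n^{a_1}_{\alpha_1}\cdots n^{a_n}_{\alpha_n}$, $\nabla_{a_1\cdots a_n}:=\nabla_{a_1}\cdots\nabla_{a_n}$; round brackets denote unit-normalized symmetrization over the enclosed Greek indices. *)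

theory Defs
  imports "HOL-Analysis.Analysis" "HOL-Combinatorics.Permutations"
begin

text \<open>Local-coordinate model: the Riemannian manifold is an open set U of
real^'n (a coordinate chart), Latin (tangent) indices range over the finite
type 'n, Greek indices (components of the defining map) over the finite type 'k.\<close>

definition pd :: "'n::finite \<Rightarrow> (real^'n \<Rightarrow> real) \<Rightarrow> real^'n \<Rightarrow> real" where
  "pd i f x = frechet_derivative f (at x) (axis i 1)"

fun pdl :: "'n::finite list \<Rightarrow> (real^'n \<Rightarrow> real) \<Rightarrow> real^'n \<Rightarrow> real" where
  "pdl [] f = f"
| "pdl (i # is) f = pd i (pdl is f)"

definition smooth_on :: "(real^'n::finite) set \<Rightarrow> (real^'n \<Rightarrow> real) \<Rightarrow> bool" where
  "smooth_on U f \<longleftrightarrow> (\<forall>is. \<forall>x\<in>U. pdl is f differentiable (at x))"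

definition riem_metric :: "(real^'n::finite) set \<Rightarrow> (real^'n \<Rightarrow> 'n \<Rightarrow> 'n \<Rightarrow> real) \<Rightarrow> bool" where
  "riem_metric U g \<longleftrightarrow> open U \<and>
     (\<forall>i j. smooth_on U (\<lambda>x. g x i j)) \<and>
     (\<forall>x\<in>U. \<forall>i j. g x i j = g x j i) \<and>
     (\<forall>x\<in>U. \<forall>v::real^'n. v \<noteq> 0 \<longrightarrow> (\<Sum>i\<in>UNIV. \<Sum>j\<in>UNIV. v$i * v$j * g x i j) > 0)"

definition ginv :: "(real^'n::finite \<Rightarrow> 'n \<Rightarrow> 'n \<Rightarrow> real) \<Rightarrow> real^'n \<Rightarrow> 'n \<Rightarrow> 'n \<Rightarrow> real" where
  "ginv g x a b = matrix_inv (\<chi> i j. g x i j) $ a $ b"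

definition christoffel :: "(real^'n::finite \<Rightarrow> 'n \<Rightarrow> 'n \<Rightarrow> real) \<Rightarrow> real^'n \<Rightarrow> 'n \<Rightarrow> 'n \<Rightarrow> 'n \<Rightarrow> real" where
  "christoffel g x c a b = (1/2) * (\<Sum>d\<in>UNIV. ginv g x c d *
      (pd a (\<lambda>y. g y b d) x + pd b (\<lambda>y. g y a d) x - pd d (\<lambda>y. g y a b) x))"

text \<open>A mixed tensor field T: T ups lows x is the component with upper indices
ups and lower indices lows at the point x.  The Levi-Civita covariant derivative
adds one lower index in front: (nabla T)^{ups}_{a lows} = nabla_a T^{ups}_{lows}.\<close>
type_synonym 'n tensor = "'n list \<Rightarrow> 'n list \<Rightarrow> real^'n \<Rightarrow> real"

definition nabla :: "(real^'n::finite \<Rightarrow> 'n \<Rightarrow> 'n \<Rightarrow> real) \<Rightarrow> 'n tensor \<Rightarrow> 'n tensor" where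
  "nabla g T ups lows x = (case lows of [] \<Rightarrow> 0 | a # ls \<Rightarrow>
      pd a (T ups ls) x
      + (\<Sum>i<length ups. \<Sum>c\<in>UNIV. christoffel g x (ups ! i) a c * T (ups[i := c]) ls x)
      - (\<Sum>j<length ls. \<Sum>c\<in>UNIV. christoffel g x c a (ls ! j) * T ups (ls[j := c]) x))"

definition nablas :: "(real^'n::finite \<Rightarrow> 'n \<Rightarrow> 'n \<Rightarrow> real) \<Rightarrow> nat \<Rightarrow> 'n tensor \<Rightarrow> 'n tensor" where
  "nablas g k T = (nabla g ^^ k) T"

definition nlow :: "('k \<Rightarrow> real^'n::finite \<Rightarrow> real) \<Rightarrow> real^'n \<Rightarrow> 'n \<Rightarrow> 'k \<Rightarrow> real" where
  "nlow s x a \<alpha> = pd a (s \<alpha>) x"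

definition nup :: "(real^'n::finite \<Rightarrow> 'n \<Rightarrow> 'n \<Rightarrow> real) \<Rightarrow> ('k \<Rightarrow> real^'n \<Rightarrow> real) \<Rightarrow> real^'n \<Rightarrow> 'n \<Rightarrow> 'k \<Rightarrow> real" where
  "nup g s x a \<alpha> = (\<Sum>b\<in>UNIV. ginv g x a b * nlow s x b \<alpha>)"

text \<open>The vector field n^b_beta as a (1,0)-tensor field (only its component
with one upper index is meaningful).\<close>
definition nup_tensor :: "(real^'n::finite \<Rightarrow> 'n \<Rightarrow> 'n \<Rightarrow> real) \<Rightarrow> ('k \<Rightarrow> real^'n \<Rightarrow> real) \<Rightarrow> 'k \<Rightarrow> 'n tensor" where
  "nup_tensor g s \<beta> ups lows x = nup g s x (hd ups) \<beta>"

definition Gmat :: "(real^'n::finite \<Rightarrow> 'n \<Rightarrow> 'n \<Rightarrow> real) \<Rightarrow> ('k \<Rightarrow> real^'n \<Rightarrow> real) \<Rightarrow> 'k \<Rightarrow> 'k \<Rightarrow> real^'n \<Rightarrow> real" where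
  "Gmat g s \<alpha> \<beta> x = (\<Sum>a\<in>UNIV. \<Sum>b\<in>UNIV. ginv g x a b * nlow s x a \<alpha> * nlow s x b \<beta>)"

definition G_tensor :: "(real^'n::finite \<Rightarrow> 'n \<Rightarrow> 'n \<Rightarrow> real) \<Rightarrow> ('k \<Rightarrow> real^'n \<Rightarrow> real) \<Rightarrow> 'k \<Rightarrow> 'k \<Rightarrow> 'n tensor" where
  "G_tensor g s \<alpha> \<beta> ups lows x = Gmat g s \<alpha> \<beta> x"

definition defining_map :: "(real^'n::finite) set \<Rightarrow> ('k::finite \<Rightarrow> real^'n \<Rightarrow> real) \<Rightarrow> (real^'n) set \<Rightarrow> bool" where
  "defining_map U s \<Lambda> \<longleftrightarrow> (\<forall>\<alpha>. smooth_on U (s \<alpha>)) \<and>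
     \<Lambda> = {x\<in>U. \<forall>\<alpha>. s \<alpha> x = 0} \<and>
     (\<forall>x\<in>\<Lambda>. \<forall>c::'k \<Rightarrow> real. (\<forall>a. (\<Sum>\<alpha>\<in>UNIV. c \<alpha> * pd a (s \<alpha>) x) = 0) \<longrightarrow> (\<forall>\<alpha>. c \<alpha> = 0))"

definition O_s2 :: "(real^'n::finite) set \<Rightarrow> ('k::finite \<Rightarrow> real^'n \<Rightarrow> real) \<Rightarrow> (real^'n \<Rightarrow> real) \<Rightarrow> bool" where
  "O_s2 U s f \<longleftrightarrow> (\<exists>T::'k \<Rightarrow> 'k \<Rightarrow> real^'n \<Rightarrow> real.
     (\<forall>\<gamma> \<delta>. smooth_on U (T \<gamma> \<delta>)) \<and>
     (\<forall>x\<in>U. f x = (\<Sum>\<gamma>\<in>UNIV. \<Sum>\<delta>\<in>UNIV. s \<gamma> x * s \<delta> x * T \<gamma> \<delta> x)))"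

definition symmetrize :: "('k list \<Rightarrow> real) \<Rightarrow> 'k list \<Rightarrow> real" where
  "symmetrize f \<alpha>s = (1 / fact (length \<alpha>s)) *
     (\<Sum>\<sigma>\<in>{\<sigma>. \<sigma> permutes {..<length \<alpha>s}}. f (map (\<lambda>i. \<alpha>s ! \<sigma> i) [0..<length \<alpha>s]))"

definition nprod :: "(real^'n::finite \<Rightarrow> 'n \<Rightarrow> 'n \<Rightarrow> real) \<Rightarrow> ('k \<Rightarrow> real^'n \<Rightarrow> real) \<Rightarrow> real^'n \<Rightarrow> 'n list \<Rightarrow> 'k list \<Rightarrow> real" where
  "nprod g s x as \<beta>s = (\<Prod>i<length as. nup g s x (as ! i) (\<beta>s ! i))"

end

theory Submission
  imports Defs
begin

lemma pd_works:
  assumes "f differentiable (at x)"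
  shows "(f has_derivative frechet_derivative f (at x)) (at x)"
  using assms frechet_derivative_works by blast

lemma pd_local:
  assumes U: "open U" "x \<in> U" and eq: "\<And>y. y \<in> U \<Longrightarrow> f y = h y"
  shows "pd i f x = pd i h x"
proof -
  have "(\<lambda>D. (f has_derivative D) (at x)) = (\<lambda>D. (h has_derivative D) (at x))"
  proof
    fix D show "(f has_derivative D) (at x) = (h has_derivative D) (at x)"
      using has_derivative_transform_within_open[OF _ U(1) U(2), of f D UNIV h]
            has_derivative_transform_within_open[OF _ U(1) U(2), of h D UNIV f] eq
      by auto
  qed
  then show ?thesis unfolding pd_def frechet_derivative_def by simp
qed

lemma diff_local:
  assumes U: "open U" "x \<in> U" and d: "f differentiable (at x)"
    and eq: "\<And>y. y \<in> U \<Longrightarrow> f y = h y"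
  shows "h differentiable (at x)"
  using d has_derivative_transform_within_open[OF _ U(1) U(2), of f _ UNIV h] eq
  unfolding differentiable_def by auto

lemma pdl_local:
  assumes U: "open U" and eq: "\<And>y. y \<in> U \<Longrightarrow> f y = h y"
  shows "x \<in> U \<Longrightarrow> pdl ks f x = pdl ks h x"
proof (induction ks arbitrary: x)
  case Nil then show ?case using eq by simp
next
  case (Cons i ks) then show ?case using pd_local[OF U Cons.prems, of "pdl ks f" "pdl ks h"] by simp
qed

lemma pdl_append: "pdl (ks @ [i]) f = pdl ks (pd i f)"
  by (induction ks) auto

lemma pd_add:
  assumes "f differentiable (at x)" "h differentiable (at x)"
  shows "pd i (\<lambda>y. f y + h y) x = pd i f x + pd i h x"
proof -
  have "((\<lambda>y. f y + h y) has_derivative (\<lambda>v. frechet_derivative f (at x) v + frechet_derivative h (at x) v)) (at x)"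
    using pd_works[OF assms(1)] pd_works[OF assms(2)] by (rule has_derivative_add)
  then show ?thesis unfolding pd_def by (simp add: frechet_derivative_at[symmetric])
qed

lemma pd_diff:
  assumes "f differentiable (at x)" "h differentiable (at x)"
  shows "pd i (\<lambda>y. f y - h y) x = pd i f x - pd i h x"
proof -
  have "((\<lambda>y. f y - h y) has_derivative (\<lambda>v. frechet_derivative f (at x) v - frechet_derivative h (at x) v)) (at x)"
    using pd_works[OF assms(1)] pd_works[OF assms(2)] by (rule has_derivative_diff)
  then show ?thesis unfolding pd_def by (simp add: frechet_derivative_at[symmetric])
qed

lemma pd_mult:
  assumes "f differentiable (at x)" "h differentiable (at x)"
  shows "pd i (\<lambda>y. f y * h y) x = pd i f x * h x + f x * pd i h x"
proof -
  have "((\<lambda>y. f y * h y) has_derivative (\<lambda>v. f x * frechet_derivative h (at x) v + frechet_derivative f (at x) v * h x)) (at x)"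
    using pd_works[OF assms(1)] pd_works[OF assms(2)] by (rule has_derivative_mult)
  then show ?thesis unfolding pd_def by (simp add: frechet_derivative_at[symmetric])
qed

lemma pd_const: "pd i (\<lambda>y. c) x = 0"
proof -
  have "((\<lambda>y. c) has_derivative (\<lambda>v. 0)) (at x)" by simp
  then show ?thesis unfolding pd_def by (simp add: frechet_derivative_at[symmetric])
qed

lemma pd_inverse:
  assumes "f differentiable (at x)" "f x \<noteq> 0"
  shows "pd i (\<lambda>y. inverse (f y)) x = - (pd i f x * inverse (f x) * inverse (f x))"
proof -
  have "((\<lambda>y. inverse (f y)) has_derivative (\<lambda>v. - (inverse (f x) * frechet_derivative f (at x) v * inverse (f x)))) (at x)"
    using Deriv.has_derivative_inverse[OF assms(2) pd_works[OF assms(1)]] .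
  then show ?thesis unfolding pd_def by (simp add: frechet_derivative_at[symmetric])
qed

lemma pd_sum:
  assumes "\<And>j. j \<in> J \<Longrightarrow> f j differentiable (at x)"
  shows "pd i (\<lambda>y. \<Sum>j\<in>J. f j y) x = (\<Sum>j\<in>J. pd i (f j) x)"
proof -
  have "((\<lambda>y. \<Sum>j\<in>J. f j y) has_derivative (\<lambda>v. \<Sum>j\<in>J. frechet_derivative (f j) (at x) v)) (at x)"
    using pd_works[OF assms] by (rule has_derivative_sum)
  then show ?thesis unfolding pd_def by (simp add: frechet_derivative_at[symmetric])
qed

lemma pd_cmult:
  assumes "f differentiable (at x)"
  shows "pd i (\<lambda>y. c * f y) x = c * pd i f x"
  using pd_mult[of "\<lambda>y. c" x f i] assms by (simp add: pd_const)

definition su :: "nat \<Rightarrow> (real^'n::finite) set \<Rightarrow> (real^'n \<Rightarrow> real) \<Rightarrow> bool" where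
  "su n U f \<longleftrightarrow> (\<forall>ks::'n list. length ks \<le> n \<longrightarrow> (\<forall>x\<in>U. pdl ks f differentiable (at x)))"

lemma su_Suc:
  fixes f :: "real^'n::finite \<Rightarrow> real"
  shows "su (Suc n) U f \<longleftrightarrow> (\<forall>x\<in>U. f differentiable (at x)) \<and> (\<forall>i. su n U (pd i f))"
proof
  assume a: "su (Suc n) U f"
  have "\<forall>x\<in>U. f differentiable (at x)" using a[unfolded su_def, rule_format, of "[]"] by simp
  moreover have "su n U (pd i f)" for i
    unfolding su_def
  proof (intro allI impI ballI)
    fix ks :: "'n list" and x assume "length ks \<le> n" "x \<in> U"
    then show "pdl ks (pd i f) differentiable (at x)"
      using a[unfolded su_def, rule_format, of "ks @ [i]" x] by (simp add: pdl_append)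
  qed
  ultimately show "(\<forall>x\<in>U. f differentiable (at x)) \<and> (\<forall>i. su n U (pd i f))" by blast
next
  assume a: "(\<forall>x\<in>U. f differentiable (at x)) \<and> (\<forall>i. su n U (pd i f))"
  show "su (Suc n) U f" unfolding su_def
  proof (intro allI impI ballI)
    fix ks :: "'n list" and x assume l: "length ks \<le> Suc n" and x: "x \<in> U"
    show "pdl ks f differentiable (at x)"
    proof (cases ks rule: rev_cases)
      case Nil then show ?thesis using a x by simp
    next
      case (snoc js i)
      then show ?thesis using a l x unfolding su_def by (simp add: pdl_append)
    qed
  qed
qed

lemma su_0: "su 0 U f \<longleftrightarrow> (\<forall>x\<in>U. f differentiable (at x))"
  unfolding su_def by simp

lemma su_mono: "su n U f \<Longrightarrow> m \<le> n \<Longrightarrow> su m U f"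
  unfolding su_def by auto

lemma smooth_on_su: "smooth_on U f \<longleftrightarrow> (\<forall>n. su n U f)"
  unfolding smooth_on_def su_def by (metis le_refl)

lemma su_local:
  fixes f :: "real^'n::finite \<Rightarrow> real"
  assumes U: "open U" and s: "su n U f" and eq: "\<And>y. y \<in> U \<Longrightarrow> f y = h y"
  shows "su n U h"
  unfolding su_def
proof (intro allI impI ballI)
  fix ks :: "'n list" and x assume "length ks \<le> n" "x \<in> U"
  then have "pdl ks f differentiable (at x)" using s unfolding su_def by blast
  then show "pdl ks h differentiable (at x)"
    by (rule diff_local[OF U \<open>x \<in> U\<close>]) (rule pdl_local[OF U eq])
qed

lemma su_const: "su n U (\<lambda>x. c)"
proof (induction n arbitrary: c)
  case 0 then show ?case unfolding su_0 by simp
next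
  case (Suc n)
  have e: "pd i (\<lambda>x. c) = (\<lambda>x. 0)" for i by (rule ext) (simp add: pd_const)
  have "su n U (pd i (\<lambda>x. c))" for i unfolding e by (rule Suc.IH)
  then show ?case unfolding su_Suc by simp
qed

lemma su_add:
  assumes U: "open U"
  shows "su n U f \<Longrightarrow> su n U h \<Longrightarrow> su n U (\<lambda>x. f x + h x)"
proof (induction n arbitrary: f h)
  case 0 then show ?case unfolding su_0 by (blast intro: differentiable_add)
next
  case (Suc n)
  have d: "\<forall>x\<in>U. f differentiable (at x)" "\<forall>x\<in>U. h differentiable (at x)"
    using Suc.prems unfolding su_Suc by blast+
  have "su n U (pd i (\<lambda>x. f x + h x))" for i
  proof -
    have "su n U (pd i f)" "su n U (pd i h)" using Suc.prems unfolding su_Suc by blast+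
    then have "su n U (\<lambda>x. pd i f x + pd i h x)" by (rule Suc.IH)
    then show ?thesis by (rule su_local[OF U]) (use d in \<open>simp add: pd_add\<close>)
  qed
  then show ?case using d unfolding su_Suc by (blast intro: differentiable_add)
qed

lemma su_neg:
  assumes U: "open U"
  shows "su n U f \<Longrightarrow> su n U (\<lambda>x. - f x)"
proof (induction n arbitrary: f)
  case 0 then show ?case unfolding su_0 by (blast intro: differentiable_minus)
next
  case (Suc n)
  have d: "\<forall>x\<in>U. f differentiable (at x)" using Suc.prems unfolding su_Suc by blast
  have "su n U (pd i (\<lambda>x. - f x))" for i
  proof -
    have "su n U (pd i f)" using Suc.prems unfolding su_Suc by blast
    then have "su n U (\<lambda>x. - pd i f x)" by (rule Suc.IH)
    then show ?thesis by (rule su_local[OF U]) (use d pd_diff[of "\<lambda>x. 0" _ f i] in \<open>simp add: pd_const\<close>)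
  qed
  then show ?case using d unfolding su_Suc by (blast intro: differentiable_minus)
qed

lemma su_mult:
  assumes U: "open U"
  shows "su n U f \<Longrightarrow> su n U h \<Longrightarrow> su n U (\<lambda>x. f x * h x)"
proof (induction n arbitrary: f h)
  case 0 then show ?case unfolding su_0 by (blast intro: differentiable_mult)
next
  case (Suc n)
  have d: "\<forall>x\<in>U. f differentiable (at x)" "\<forall>x\<in>U. h differentiable (at x)"
    using Suc.prems unfolding su_Suc by blast+
  have "su n U (pd i (\<lambda>x. f x * h x))" for i
  proof -
    have f1: "su n U (pd i f)" "su n U (pd i h)" using Suc.prems unfolding su_Suc by blast+
    have f2: "su n U f" "su n U h" using Suc.prems su_mono[of "Suc n" U] by (meson le_SucI order_refl)+
    have a: "su n U (\<lambda>x. pd i f x * h x)" by (rule Suc.IH[OF f1(1) f2(2)])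
    have b: "su n U (\<lambda>x. f x * pd i h x)" by (rule Suc.IH[OF f2(1) f1(2)])
    have "su n U (\<lambda>x. pd i f x * h x + f x * pd i h x)" using su_add[OF U a b] .
    then show ?thesis by (rule su_local[OF U]) (use d in \<open>simp add: pd_mult\<close>)
  qed
  then show ?case using d unfolding su_Suc by (blast intro: differentiable_mult)
qed

lemma su_inverse:
  assumes U: "open U"
  shows "su n U f \<Longrightarrow> (\<forall>x\<in>U. f x \<noteq> 0) \<Longrightarrow> su n U (\<lambda>x. inverse (f x))"
proof (induction n arbitrary: f)
  case 0 then show ?case unfolding su_0 by (blast intro: differentiable_inverse)
next
  case (Suc n)
  have d: "\<forall>x\<in>U. f differentiable (at x)" using Suc.prems unfolding su_Suc by blast
  have dI: "\<forall>x\<in>U. (\<lambda>x. inverse (f x)) differentiable (at x)"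
    using d Suc.prems(2) by (blast intro: differentiable_inverse)
  have "su n U (pd i (\<lambda>x. inverse (f x)))" for i
  proof -
    have I: "su n U (\<lambda>x. inverse (f x))" using Suc.IH[of f] Suc.prems su_mono[of "Suc n" U f n] by simp
    have P: "su n U (pd i f)" using Suc.prems unfolding su_Suc by blast
    have "su n U (\<lambda>x. - (pd i f x * inverse (f x) * inverse (f x)))"
      by (intro su_neg[OF U] su_mult[OF U] P I)
    then show ?thesis by (rule su_local[OF U]) (use d Suc.prems(2) in \<open>simp add: pd_inverse\<close>)
  qed
  then show ?case using dI unfolding su_Suc by blast
qed

lemma su_sum:
  assumes U: "open U"
  shows "(\<And>j. j \<in> J \<Longrightarrow> su n U (f j)) \<Longrightarrow> su n U (\<lambda>x. \<Sum>j\<in>J. f j x)"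
proof (induction J rule: infinite_finite_induct)
  case (infinite A) then show ?case by (simp add: su_const)
next
  case empty then show ?case by (simp add: su_const)
next
  case (insert j A) then show ?case by (simp add: su_add[OF U])
qed

lemma su_prod:
  assumes U: "open U"
  shows "(\<And>j. j \<in> J \<Longrightarrow> su n U (f j)) \<Longrightarrow> su n U (\<lambda>x. \<Prod>j\<in>J. f j x)"
proof (induction J rule: infinite_finite_induct)
  case (infinite A) then show ?case by (simp add: su_const)
next
  case empty then show ?case by (simp add: su_const)
next
  case (insert j A) then show ?case by (simp add: su_mult[OF U])
qed

lemma smooth_const: "smooth_on U (\<lambda>x. c)"
  by (simp add: smooth_on_su su_const)
lemma smooth_add: "open U \<Longrightarrow> smooth_on U f \<Longrightarrow> smooth_on U h \<Longrightarrow> smooth_on U (\<lambda>x. f x + h x)"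
  by (simp add: smooth_on_su su_add)
lemma smooth_neg: "open U \<Longrightarrow> smooth_on U f \<Longrightarrow> smooth_on U (\<lambda>x. - f x)"
  by (simp add: smooth_on_su su_neg)
lemma smooth_diff: "open U \<Longrightarrow> smooth_on U f \<Longrightarrow> smooth_on U h \<Longrightarrow> smooth_on U (\<lambda>x. f x - h x)"
  using smooth_add[of U f "\<lambda>x. - h x"] smooth_neg[of U h] by simp
lemma smooth_mult: "open U \<Longrightarrow> smooth_on U f \<Longrightarrow> smooth_on U h \<Longrightarrow> smooth_on U (\<lambda>x. f x * h x)"
  by (simp add: smooth_on_su su_mult)
lemma smooth_inverse: "open U \<Longrightarrow> smooth_on U f \<Longrightarrow> (\<forall>x\<in>U. f x \<noteq> 0) \<Longrightarrow> smooth_on U (\<lambda>x. inverse (f x))"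
  by (simp add: smooth_on_su su_inverse)
lemma smooth_sum: "open U \<Longrightarrow> (\<And>j. j \<in> J \<Longrightarrow> smooth_on U (f j)) \<Longrightarrow> smooth_on U (\<lambda>x. \<Sum>j\<in>J. f j x)"
  by (simp add: smooth_on_su su_sum)
lemma smooth_prod: "open U \<Longrightarrow> (\<And>j. j \<in> J \<Longrightarrow> smooth_on U (f j)) \<Longrightarrow> smooth_on U (\<lambda>x. \<Prod>j\<in>J. f j x)"
  by (simp add: smooth_on_su su_prod)
lemma smooth_pd: "smooth_on U f \<Longrightarrow> smooth_on U (pd i f)"
  unfolding smooth_on_su using su_Suc by blast
lemma smooth_diffble: "smooth_on U f \<Longrightarrow> x \<in> U \<Longrightarrow> f differentiable (at x)"
  unfolding smooth_on_def by (drule spec[of _ "[]"]) simp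
lemma smooth_local: "open U \<Longrightarrow> (\<And>y. y \<in> U \<Longrightarrow> f y = h y) \<Longrightarrow> smooth_on U f \<Longrightarrow> smooth_on U h"
  unfolding smooth_on_su using su_local by blast

section \<open>Metric and inverse metric\<close>

definition Gm :: "(real^'n::finite \<Rightarrow> 'n \<Rightarrow> 'n \<Rightarrow> real) \<Rightarrow> real^'n \<Rightarrow> real^'n^'n" where
  "Gm g x = (\<chi> i j. g x i j)"

lemma ginv_Gm: "ginv g x a b = matrix_inv (Gm g x) $ a $ b"
  by (simp add: ginv_def Gm_def)

lemma metric_open: "riem_metric U g \<Longrightarrow> open U"
  unfolding riem_metric_def by blast
lemma metric_smooth: "riem_metric U g \<Longrightarrow> smooth_on U (\<lambda>x. g x i j)"
  unfolding riem_metric_def by blast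
lemma metric_sym: "riem_metric U g \<Longrightarrow> x \<in> U \<Longrightarrow> g x i j = g x j i"
  unfolding riem_metric_def by blast

lemma metric_invertible:
  assumes m: "riem_metric U g" and x: "x \<in> U"
  shows "invertible (Gm g x)"
proof -
  have "\<forall>v. Gm g x *v v = 0 \<longrightarrow> v = 0"
  proof (intro allI impI)
    fix v assume h: "Gm g x *v v = 0"
    show "v = 0"
    proof (rule ccontr)
      assume "v \<noteq> 0"
      then have pos: "(\<Sum>i\<in>UNIV. \<Sum>j\<in>UNIV. v$i * v$j * g x i j) > 0"
        using m x unfolding riem_metric_def by blast
      have "(\<Sum>i\<in>UNIV. \<Sum>j\<in>UNIV. v$i * v$j * g x i j) = (\<Sum>i\<in>UNIV. v$i * (Gm g x *v v)$i)"
        by (simp add: Gm_def matrix_vector_mult_def sum_distrib_left mult.commute mult.left_commute)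
      also have "\<dots> = 0" using h by simp
      finally show False using pos by simp
    qed
  qed
  then obtain B where "B ** Gm g x = mat 1" using matrix_left_invertible_ker by blast
  then show ?thesis unfolding invertible_def using matrix_left_right_inverse by blast
qed

lemma ginv_inverse:
  assumes m: "riem_metric U g" and x: "x \<in> U"
  shows "Gm g x ** matrix_inv (Gm g x) = mat 1" "matrix_inv (Gm g x) ** Gm g x = mat 1"
proof -
  have "\<exists>A'. Gm g x ** A' = mat 1 \<and> A' ** Gm g x = mat 1"
    using metric_invertible[OF m x] unfolding invertible_def by blast
  then have "Gm g x ** matrix_inv (Gm g x) = mat 1 \<and> matrix_inv (Gm g x) ** Gm g x = mat 1"
    unfolding matrix_inv_def by (rule someI_ex)
  then show "Gm g x ** matrix_inv (Gm g x) = mat 1" "matrix_inv (Gm g x) ** Gm g x = mat 1" by auto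
qed

lemma ginv_right:
  assumes m: "riem_metric U g" and x: "x \<in> U"
  shows "(\<Sum>b\<in>UNIV. g x a b * ginv g x b c) = (if a = c then 1 else 0)"
proof -
  have "(Gm g x ** matrix_inv (Gm g x)) $ a $ c = mat 1 $ a $ c" using ginv_inverse[OF m x] by simp
  then show ?thesis by (simp add: matrix_matrix_mult_def ginv_Gm mat_def Gm_def split: if_splits)
qed

lemma ginv_left:
  assumes m: "riem_metric U g" and x: "x \<in> U"
  shows "(\<Sum>b\<in>UNIV. ginv g x a b * g x b c) = (if a = c then 1 else 0)"
proof -
  have "(matrix_inv (Gm g x) ** Gm g x) $ a $ c = mat 1 $ a $ c" using ginv_inverse[OF m x] by simp
  then show ?thesis by (simp add: matrix_matrix_mult_def ginv_Gm mat_def Gm_def split: if_splits)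
qed

lemma ginv_sym:
  assumes m: "riem_metric U g" and x: "x \<in> U"
  shows "ginv g x a b = ginv g x b a"
proof -
  let ?G = "Gm g x" and ?I = "matrix_inv (Gm g x)"
  have T: "transpose ?G = ?G" using metric_sym[OF m x] by (simp add: transpose_def Gm_def vec_eq_iff)
  have "transpose ?I ** ?G = mat 1"
    using ginv_inverse(1)[OF m x] by (metis T matrix_transpose_mul transpose_mat)
  then have "transpose ?I = transpose ?I ** (?G ** ?I)" using ginv_inverse(1)[OF m x]
    by (simp add: matrix_mul_rid)
  also have "\<dots> = ?I" using \<open>transpose ?I ** ?G = mat 1\<close>
    by (simp add: matrix_mul_assoc matrix_mul_lid)
  finally have "transpose ?I = ?I" .
  then have "transpose ?I $ a $ b = ?I $ a $ b" by simp
  then show ?thesis by (simp add: ginv_Gm transpose_def)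
qed

lemma det_smooth:
  assumes U: "open U" and s: "\<And>i j. smooth_on U (\<lambda>x. M x $ i $ j)"
  shows "smooth_on U (\<lambda>x. det (M x :: real^'n::finite^'n))"
  unfolding det_def
  by (intro smooth_sum[OF U] smooth_mult[OF U] smooth_const smooth_prod[OF U] s)

lemma ginv_cramer:
  assumes m: "riem_metric U g" and x: "x \<in> U"
  shows "ginv g x a b = det (\<chi> i j. if j = a then axis b 1 $ i else Gm g x $ i $ j) / det (Gm g x)"
proof -
  have d0: "det (Gm g x) \<noteq> 0" using metric_invertible[OF m x] invertible_det_nz by blast
  have "Gm g x *v (matrix_inv (Gm g x) *v axis b 1) = axis b 1"
    using ginv_inverse(1)[OF m x] by (simp add: matrix_vector_mul_assoc)
  then have "matrix_inv (Gm g x) *v axis b 1 = (\<chi> k. det (\<chi> i j. if j = k then axis b 1 $ i else Gm g x $ i $ j) / det (Gm g x))"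
    using cramer[OF d0] by blast
  then have "(matrix_inv (Gm g x) *v axis b 1) $ a = det (\<chi> i j. if j = a then axis b 1 $ i else Gm g x $ i $ j) / det (Gm g x)"
    by simp
  moreover have "(matrix_inv (Gm g x) *v axis b 1) $ a = ginv g x a b"
    by (simp add: matrix_vector_mult_def ginv_Gm axis_def if_distrib cong: if_cong)
  ultimately show ?thesis by simp
qed

lemma ginv_smooth:
  assumes m: "riem_metric U g"
  shows "smooth_on U (\<lambda>x. ginv g x a b)"
proof -
  have U: "open U" using m by (rule metric_open)
  have s1: "smooth_on U (\<lambda>x. det (\<chi> i j. if j = a then axis b 1 $ i else Gm g x $ i $ j))"
    by (rule det_smooth[OF U]) (case_tac "j = a", simp_all add: Gm_def smooth_const metric_smooth[OF m])
  have s2: "smooth_on U (\<lambda>x. inverse (det (Gm g x)))"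
    by (rule smooth_inverse[OF U det_smooth[OF U]])
      (use metric_invertible[OF m] invertible_det_nz in \<open>auto simp: Gm_def metric_smooth[OF m]\<close>)
  have "smooth_on U (\<lambda>x. det (\<chi> i j. if j = a then axis b 1 $ i else Gm g x $ i $ j) * inverse (det (Gm g x)))"
    by (rule smooth_mult[OF U s1 s2])
  then show ?thesis
    by (rule smooth_local[OF U, rotated]) (simp add: ginv_cramer[OF m] divide_inverse)
qed

lemma metric_diffble: "riem_metric U g \<Longrightarrow> x \<in> U \<Longrightarrow> (\<lambda>y. g y i j) differentiable (at x)"
  by (rule smooth_diffble[OF metric_smooth])
lemma ginv_diffble: "riem_metric U g \<Longrightarrow> x \<in> U \<Longrightarrow> (\<lambda>y. ginv g y i j) differentiable (at x)"
  by (rule smooth_diffble[OF ginv_smooth])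

lemma pd_metric_sym:
  assumes m: "riem_metric U g" and x: "x \<in> U"
  shows "pd i (\<lambda>y. g y a b) x = pd i (\<lambda>y. g y b a) x"
  by (rule pd_local[OF metric_open[OF m] x]) (rule metric_sym[OF m])

lemma pd_ginv:
  assumes m: "riem_metric U g" and x: "x \<in> U"
  shows "pd i (\<lambda>y. ginv g y a b) x =
     - (\<Sum>c\<in>UNIV. \<Sum>d\<in>UNIV. ginv g x a c * pd i (\<lambda>y. g y c d) x * ginv g x d b)"
proof -
  have U: "open U" by (rule metric_open[OF m])
  define P where "P c = pd i (\<lambda>y. ginv g y c b) x" for c
  have key: "(\<Sum>c\<in>UNIV. g x e c * P c) = - (\<Sum>c\<in>UNIV. pd i (\<lambda>y. g y e c) x * ginv g x c b)" for e
  proof -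
    have "pd i (\<lambda>y. \<Sum>c\<in>UNIV. g y e c * ginv g y c b) x = pd i (\<lambda>y. if e = b then 1 else 0) x"
      by (rule pd_local[OF U x]) (rule ginv_right[OF m])
    also have "\<dots> = 0" by (rule pd_const)
    finally have "pd i (\<lambda>y. \<Sum>c\<in>UNIV. g y e c * ginv g y c b) x = 0" .
    moreover have "pd i (\<lambda>y. \<Sum>c\<in>UNIV. g y e c * ginv g y c b) x =
        (\<Sum>c\<in>UNIV. pd i (\<lambda>y. g y e c) x * ginv g x c b + g x e c * P c)"
      unfolding P_def
      by (subst pd_sum) (auto intro!: sum.cong pd_mult differentiable_mult metric_diffble[OF m x] ginv_diffble[OF m x])
    ultimately show ?thesis by (simp add: sum.distrib eq_neg_iff_add_eq_0 add.commute)
  qed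
  have "P a = (\<Sum>c\<in>UNIV. (if a = c then P c else 0))" by (simp add: sum.delta)
  also have "\<dots> = (\<Sum>c\<in>UNIV. (if a = c then 1 else 0) * P c)" by (rule sum.cong) auto
  also have "\<dots> = (\<Sum>c\<in>UNIV. (\<Sum>e\<in>UNIV. ginv g x a e * g x e c) * P c)"
    by (simp add: ginv_left[OF m x])
  also have "\<dots> = (\<Sum>e\<in>UNIV. ginv g x a e * (\<Sum>c\<in>UNIV. g x e c * P c))"
    by (simp add: sum_distrib_left sum_distrib_right mult.assoc) (rule sum.swap)
  also have "\<dots> = (\<Sum>e\<in>UNIV. ginv g x a e * - (\<Sum>c\<in>UNIV. pd i (\<lambda>y. g y e c) x * ginv g x c b))"
    by (simp add: key)
  also have "\<dots> = - (\<Sum>c\<in>UNIV. \<Sum>d\<in>UNIV. ginv g x a c * pd i (\<lambda>y. g y c d) x * ginv g x d b)"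
    by (simp add: sum_distrib_left sum_negf mult.assoc)
  finally show ?thesis unfolding P_def .
qed

lemma christoffel_smooth:
  assumes m: "riem_metric U g"
  shows "smooth_on U (\<lambda>x. christoffel g x c a b)"
proof -
  have U: "open U" by (rule metric_open[OF m])
  show ?thesis unfolding christoffel_def
    by (intro smooth_mult[OF U] smooth_const smooth_sum[OF U] smooth_diff[OF U] smooth_add[OF U]
        ginv_smooth[OF m] smooth_pd metric_smooth[OF m])
qed

lemma christoffel_sym:
  assumes m: "riem_metric U g" and x: "x \<in> U"
  shows "christoffel g x c a b = christoffel g x c b a"
  unfolding christoffel_def using pd_metric_sym[OF m x]
  by (simp add: add.commute)

lemma metric_compat:
  assumes m: "riem_metric U g" and x: "x \<in> U"
  shows "pd a (\<lambda>y. ginv g y c d) x + (\<Sum>e\<in>UNIV. christoffel g x c a e * ginv g x e d)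
           + (\<Sum>e\<in>UNIV. christoffel g x d a e * ginv g x c e) = 0"
proof -
  define P where "P e f = pd a (\<lambda>y. g y e f) x" for e f
  define R where "R e f = pd e (\<lambda>y. g y a f) x" for e f
  define gi where "gi e f = ginv g x e f" for e f
  have Psym: "P e f = P f e" for e f unfolding P_def by (rule pd_metric_sym[OF m x])
  have gsym: "gi e f = gi f e" for e f unfolding gi_def by (rule ginv_sym[OF m x])
  have Rrw: "pd f (\<lambda>y. g y a e) x = R f e" for e f unfolding R_def ..
  have Rrw2: "pd f (\<lambda>y. g y e a) x = R f e" for e f unfolding R_def by (rule pd_metric_sym[OF m x])
  have S1: "(\<Sum>e\<in>UNIV. christoffel g x c a e * ginv g x e d) =
      (\<Sum>e\<in>UNIV. \<Sum>f\<in>UNIV. (1/2) * (gi c f * (P e f + R e f - R f e)) * gi e d)"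
    unfolding christoffel_def gi_def P_def
    by (simp add: sum_distrib_right sum_distrib_left Rrw Rrw2 mult.assoc)
  have S2: "(\<Sum>e\<in>UNIV. christoffel g x d a e * ginv g x c e) =
      (\<Sum>e\<in>UNIV. \<Sum>f\<in>UNIV. (1/2) * (gi d f * (P e f + R e f - R f e)) * gi c e)"
    unfolding christoffel_def gi_def P_def
    by (simp add: sum_distrib_right sum_distrib_left Rrw Rrw2 mult.assoc)
  have S2': "(\<Sum>e\<in>UNIV. christoffel g x d a e * ginv g x c e) =
      (\<Sum>e\<in>UNIV. \<Sum>f\<in>UNIV. (1/2) * (gi e d * (P e f + R f e - R e f)) * gi c f)"
    unfolding S2 by (subst sum.swap) (rule sum.cong[OF refl], rule sum.cong[OF refl], simp add: gsym[of d] Psym)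
  have D: "pd a (\<lambda>y. ginv g y c d) x = - (\<Sum>e\<in>UNIV. \<Sum>f\<in>UNIV. gi c f * P e f * gi e d)"
  proof -
    have "pd a (\<lambda>y. ginv g y c d) x = - (\<Sum>f\<in>UNIV. \<Sum>e\<in>UNIV. gi c f * P f e * gi e d)"
      unfolding pd_ginv[OF m x] gi_def P_def ..
    also have "\<dots> = - (\<Sum>e\<in>UNIV. \<Sum>f\<in>UNIV. gi c f * P f e * gi e d)"
      by (subst sum.swap) simp
    finally show ?thesis using Psym by simp
  qed
  have "(\<Sum>e\<in>UNIV. christoffel g x c a e * ginv g x e d) + (\<Sum>e\<in>UNIV. christoffel g x d a e * ginv g x c e)
      = (\<Sum>e\<in>UNIV. \<Sum>f\<in>UNIV. gi c f * P e f * gi e d)"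
    unfolding S1 S2' sum.distrib[symmetric]
    by (rule sum.cong[OF refl], rule sum.cong[OF refl]) (simp add: algebra_simps)
  then show ?thesis using D by simp
qed

section \<open>Symmetry of second partial derivatives\<close>

lemma ray_has_deriv:
  assumes d: "f differentiable (at (y + s *\<^sub>R axis i 1))"
  shows "((\<lambda>t. f (y + t *\<^sub>R axis i (1::real))) has_derivative (\<lambda>r. r * pd i f (y + s *\<^sub>R axis i 1))) (at s within S)"
proof -
  have g: "((\<lambda>t. y + t *\<^sub>R axis i (1::real)) has_derivative (\<lambda>r. r *\<^sub>R axis i 1)) (at s within S)"
    by (auto intro!: derivative_eq_intros)
  have F: "(f has_derivative frechet_derivative f (at (y + s *\<^sub>R axis i 1))) (at (y + s *\<^sub>R axis i 1))"
    using d frechet_derivative_works by blast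
  have L: "linear (frechet_derivative f (at (y + s *\<^sub>R axis i 1)))" using has_derivative_linear[OF F] .
  have "((\<lambda>t. f (y + t *\<^sub>R axis i 1)) has_derivative (\<lambda>r. frechet_derivative f (at (y + s *\<^sub>R axis i 1)) (r *\<^sub>R axis i 1))) (at s within S)"
    using has_derivative_compose[OF g F] by simp
  moreover have "(\<lambda>r. frechet_derivative f (at (y + s *\<^sub>R axis i 1)) (r *\<^sub>R axis i 1)) = (\<lambda>r. r * pd i f (y + s *\<^sub>R axis i 1))"
    unfolding pd_def using linear.scaleR[OF L] by auto
  ultimately show ?thesis by simp
qed

lemma ray_mvt:
  fixes f :: "real^'n::finite \<Rightarrow> real"
  assumes h: "0 < h" and d: "\<And>s. 0 \<le> s \<Longrightarrow> s \<le> h \<Longrightarrow> f differentiable (at (y + s *\<^sub>R axis i 1))"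
  shows "\<exists>\<xi>. 0 < \<xi> \<and> \<xi> < h \<and> f (y + h *\<^sub>R axis i 1) - f y = h * pd i f (y + \<xi> *\<^sub>R axis i 1)"
proof -
  have "\<exists>\<xi>\<in>{0<..<h}. f (y + h *\<^sub>R axis i 1) - f (y + 0 *\<^sub>R axis i 1) = (h - 0) * pd i f (y + \<xi> *\<^sub>R axis i 1)"
    by (rule mvt_simple[OF h, of "\<lambda>t. f (y + t *\<^sub>R axis i 1)" "\<lambda>s r. r * pd i f (y + s *\<^sub>R axis i 1)"])
       (rule ray_has_deriv[OF d])
  then show ?thesis by auto
qed

lemma mixed_mvt:
  fixes f :: "real^'n::finite \<Rightarrow> real"
  assumes U: "open U" and f: "smooth_on U f" and h: "0 < h"
    and box: "\<And>s t. 0 \<le> s \<Longrightarrow> s \<le> h \<Longrightarrow> 0 \<le> t \<Longrightarrow> t \<le> h \<Longrightarrow> x + s *\<^sub>R axis i 1 + t *\<^sub>R axis j 1 \<in> U"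
  shows "\<exists>\<xi> \<eta>. 0 \<le> \<xi> \<and> \<xi> \<le> h \<and> 0 \<le> \<eta> \<and> \<eta> \<le> h \<and>
     f (x + h *\<^sub>R axis i 1 + h *\<^sub>R axis j 1) - f (x + h *\<^sub>R axis i 1) - f (x + h *\<^sub>R axis j 1) + f x
       = h * h * pd j (pd i f) (x + \<xi> *\<^sub>R axis i 1 + \<eta> *\<^sub>R axis j 1)"
proof -
  let ?ei = "axis i (1::real)" and ?ej = "axis j (1::real)"
  define \<psi> where "\<psi> y = f (y + h *\<^sub>R ?ej) - f y" for y
  have dpsi: "\<psi> differentiable (at (x + s *\<^sub>R ?ei))" if "0 \<le> s" "s \<le> h" for s
  proof -
    have "x + s *\<^sub>R ?ei + h *\<^sub>R ?ej \<in> U" "x + s *\<^sub>R ?ei \<in> U" using box[of s h] box[of s 0] that h by auto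
    then have "f differentiable (at (x + s *\<^sub>R ?ei + h *\<^sub>R ?ej))" "f differentiable (at (x + s *\<^sub>R ?ei))"
      using smooth_diffble[OF f] by auto
    then show ?thesis unfolding \<psi>_def
      by (intro differentiable_diff differentiable_compose[where f = f and g = "\<lambda>y. y + h *\<^sub>R ?ej", unfolded o_def]) (auto intro!: derivative_intros)
  qed
  obtain \<xi> where \<xi>: "0 < \<xi>" "\<xi> < h" and E1: "\<psi> (x + h *\<^sub>R ?ei) - \<psi> x = h * pd i \<psi> (x + \<xi> *\<^sub>R ?ei)"
    using ray_mvt[OF h dpsi] by blast
  have pdpsi: "pd i \<psi> (x + \<xi> *\<^sub>R ?ei) = pd i f (x + \<xi> *\<^sub>R ?ei + h *\<^sub>R ?ej) - pd i f (x + \<xi> *\<^sub>R ?ei)"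
  proof -
    let ?p = "x + \<xi> *\<^sub>R ?ei"
    have in1: "?p + h *\<^sub>R ?ej \<in> U" "?p \<in> U" using box[of \<xi> h] box[of \<xi> 0] \<xi> h by auto
    have d1: "f differentiable (at (?p + h *\<^sub>R ?ej))" "f differentiable (at ?p)" using smooth_diffble[OF f] in1 by auto
    have sh: "(\<lambda>y. f (y + h *\<^sub>R ?ej)) differentiable (at ?p)"
      using d1(1) by (intro differentiable_compose[where f = f and g = "\<lambda>y. y + h *\<^sub>R ?ej", unfolded o_def]) (auto intro!: derivative_intros)
    have "pd i \<psi> ?p = pd i (\<lambda>y. f (y + h *\<^sub>R ?ej)) ?p - pd i f ?p"
      unfolding \<psi>_def by (rule pd_diff[OF sh d1(2)])
    moreover have "pd i (\<lambda>y. f (y + h *\<^sub>R ?ej)) ?p = pd i f (?p + h *\<^sub>R ?ej)"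
    proof -
      have F: "(f has_derivative frechet_derivative f (at (?p + h *\<^sub>R ?ej))) (at (?p + h *\<^sub>R ?ej))"
        using d1(1) frechet_derivative_works by blast
      have "((\<lambda>y. y + h *\<^sub>R ?ej) has_derivative (\<lambda>v. v)) (at ?p)" by (auto intro!: derivative_eq_intros)
      from has_derivative_compose[OF this F]
      have "((\<lambda>y. f (y + h *\<^sub>R ?ej)) has_derivative frechet_derivative f (at (?p + h *\<^sub>R ?ej))) (at ?p)" by simp
      then show ?thesis unfolding pd_def by (simp add: frechet_derivative_at[symmetric])
    qed
    ultimately show ?thesis by simp
  qed
  have dq: "pd i f differentiable (at (x + \<xi> *\<^sub>R ?ei + t *\<^sub>R ?ej))" if "0 \<le> t" "t \<le> h" for t
    using smooth_diffble[OF smooth_pd[OF f]] box[of \<xi> t] that \<xi> by auto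
  obtain \<eta> where \<eta>: "0 < \<eta>" "\<eta> < h" and E2:
      "pd i f (x + \<xi> *\<^sub>R ?ei + h *\<^sub>R ?ej) - pd i f (x + \<xi> *\<^sub>R ?ei) = h * pd j (pd i f) (x + \<xi> *\<^sub>R ?ei + \<eta> *\<^sub>R ?ej)"
    using ray_mvt[OF h dq] by blast
  have "f (x + h *\<^sub>R ?ei + h *\<^sub>R ?ej) - f (x + h *\<^sub>R ?ei) - f (x + h *\<^sub>R ?ej) + f x = \<psi> (x + h *\<^sub>R ?ei) - \<psi> x"
    unfolding \<psi>_def by simp
  also have "\<dots> = h * h * pd j (pd i f) (x + \<xi> *\<^sub>R ?ei + \<eta> *\<^sub>R ?ej)"
    using E1 pdpsi E2 by simp
  finally show ?thesis using \<xi> \<eta> by (intro exI[of _ \<xi>] exI[of _ \<eta>]) auto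
qed

lemma pd_swap:
  fixes f :: "real^'n::finite \<Rightarrow> real"
  assumes U: "open U" and f: "smooth_on U f" and x: "x \<in> U"
  shows "pd i (pd j f) x = pd j (pd i f) x"
proof (rule ccontr)
  let ?ei = "axis i (1::real)" and ?ej = "axis j (1::real)"
  define A where "A = pd j (pd i f) x"
  define B where "B = pd i (pd j f) x"
  assume ne: "pd i (pd j f) x \<noteq> pd j (pd i f) x"
  then have ne': "A \<noteq> B" unfolding A_def B_def by simp
  define e where "e = \<bar>A - B\<bar> / 3"
  have e: "e > 0" using ne' unfolding e_def by simp
  have cA: "isCont (pd j (pd i f)) x"
    using smooth_diffble[OF smooth_pd[OF smooth_pd[OF f]] x] by (rule differentiable_imp_continuous_within)
  have cB: "isCont (pd i (pd j f)) x"
    using smooth_diffble[OF smooth_pd[OF smooth_pd[OF f]] x] by (rule differentiable_imp_continuous_within)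
  obtain d1 where d1: "d1 > 0" "\<And>y. dist y x < d1 \<Longrightarrow> dist (pd j (pd i f) y) A < e"
    using cA e unfolding continuous_at_eps_delta A_def by (metis dist_commute)
  obtain d2 where d2: "d2 > 0" "\<And>y. dist y x < d2 \<Longrightarrow> dist (pd i (pd j f) y) B < e"
    using cB e unfolding continuous_at_eps_delta B_def by (metis dist_commute)
  obtain d3 where d3: "d3 > 0" "ball x d3 \<subseteq> U" using U x open_contains_ball by blast
  define d where "d = min d1 (min d2 d3)"
  have d: "d > 0" "d \<le> d1" "d \<le> d2" "d \<le> d3" using d1 d2 d3 unfolding d_def by auto
  define h where "h = d / 4"
  have h: "h > 0" using d unfolding h_def by simp
  have small: "dist (x + s *\<^sub>R ?ei + t *\<^sub>R ?ej) x < d" if "0 \<le> s" "s \<le> h" "0 \<le> t" "t \<le> h" for s t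
  proof -
    have "dist (x + s *\<^sub>R ?ei + t *\<^sub>R ?ej) x = norm (s *\<^sub>R ?ei + t *\<^sub>R ?ej)"
      by (simp add: dist_norm)
    also have "\<dots> \<le> norm (s *\<^sub>R ?ei) + norm (t *\<^sub>R ?ej)" by (rule norm_triangle_ineq)
    also have "\<dots> = s + t" using that by simp
    also have "\<dots> < d" using that h unfolding h_def by simp
    finally show ?thesis .
  qed
  have box1: "x + s *\<^sub>R ?ei + t *\<^sub>R ?ej \<in> U" if "0 \<le> s" "s \<le> h" "0 \<le> t" "t \<le> h" for s t
    using small[OF that] d3 d by (auto simp: dist_commute)
  have box2: "x + s *\<^sub>R ?ej + t *\<^sub>R ?ei \<in> U" if "0 \<le> s" "s \<le> h" "0 \<le> t" "t \<le> h" for s t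
    using box1[of t s] that by (simp add: add.assoc add.commute add.left_commute)
  obtain \<xi> \<eta> where X: "0 \<le> \<xi>" "\<xi> \<le> h" "0 \<le> \<eta>" "\<eta> \<le> h" and E1:
    "f (x + h *\<^sub>R ?ei + h *\<^sub>R ?ej) - f (x + h *\<^sub>R ?ei) - f (x + h *\<^sub>R ?ej) + f x
       = h * h * pd j (pd i f) (x + \<xi> *\<^sub>R ?ei + \<eta> *\<^sub>R ?ej)"
    using mixed_mvt[OF U f h box1] by blast
  obtain \<xi>' \<eta>' where X': "0 \<le> \<xi>'" "\<xi>' \<le> h" "0 \<le> \<eta>'" "\<eta>' \<le> h" and E2:
    "f (x + h *\<^sub>R ?ej + h *\<^sub>R ?ei) - f (x + h *\<^sub>R ?ej) - f (x + h *\<^sub>R ?ei) + f x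
       = h * h * pd i (pd j f) (x + \<xi>' *\<^sub>R ?ej + \<eta>' *\<^sub>R ?ei)"
    using mixed_mvt[OF U f h box2] by blast
  have same: "pd j (pd i f) (x + \<xi> *\<^sub>R ?ei + \<eta> *\<^sub>R ?ej) = pd i (pd j f) (x + \<xi>' *\<^sub>R ?ej + \<eta>' *\<^sub>R ?ei)"
  proof -
    have eq: "x + h *\<^sub>R ?ej + h *\<^sub>R ?ei = x + h *\<^sub>R ?ei + h *\<^sub>R ?ej" by (simp add: algebra_simps)
    have "h * h * pd j (pd i f) (x + \<xi> *\<^sub>R ?ei + \<eta> *\<^sub>R ?ej) = h * h * pd i (pd j f) (x + \<xi>' *\<^sub>R ?ej + \<eta>' *\<^sub>R ?ei)"
      using E1 E2 unfolding eq by linarith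
    then show ?thesis using h by simp
  qed
  have a1: "dist (pd j (pd i f) (x + \<xi> *\<^sub>R ?ei + \<eta> *\<^sub>R ?ej)) A < e"
    using d1(2) small[OF X] d by simp
  have p2: "dist (x + \<xi>' *\<^sub>R ?ej + \<eta>' *\<^sub>R ?ei) x < d"
    using small[OF X'(3,4,1,2)] by (simp add: algebra_simps)
  have a2: "dist (pd i (pd j f) (x + \<xi>' *\<^sub>R ?ej + \<eta>' *\<^sub>R ?ei)) B < e"
    using d2(2) p2 d by simp
  have "\<bar>A - B\<bar> < 2 * e" using a1 a2 same unfolding dist_real_def by linarith
  then show False unfolding e_def by simp
qed

definition LL :: "nat \<Rightarrow> 'a list set" where "LL k = {l. length l = k}"

lemma finite_LL: "finite (LL k :: ('a::finite) list set)"
proof -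
  have "LL k = {xs::'a list. set xs \<subseteq> UNIV \<and> length xs = k}" unfolding LL_def by simp
  then show ?thesis using finite_lists_length_eq[of "UNIV::'a set" k] by simp
qed

lemma LL_0: "LL 0 = {[]}" unfolding LL_def by auto

lemma sum_LL_Suc:
  "(\<Sum>l\<in>LL (Suc k). F l) = (\<Sum>y\<in>(UNIV::'a::finite set). \<Sum>l\<in>LL k. F (y # l))"
proof -
  have e: "LL (Suc k) = (\<lambda>(y, l). y # l) ` (UNIV \<times> LL k)"
    unfolding LL_def by (auto simp: image_iff length_Suc_conv)
  have i: "inj_on (\<lambda>(y::'a, l). y # l) (UNIV \<times> LL k)" by (auto simp: inj_on_def)
  show ?thesis unfolding e sum.reindex[OF i] sum.cartesian_product by (simp add: case_prod_beta)
qed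

lemma sum_LL_snoc:
  "(\<Sum>l\<in>LL (Suc k). F l) = (\<Sum>l\<in>LL k. \<Sum>y\<in>(UNIV::'a::finite set). F (l @ [y]))"
proof -
  have e: "LL (Suc k) = (\<lambda>(l, y). l @ [y]) ` (LL k \<times> (UNIV::'a set))"
    by (auto simp: LL_def image_iff length_Suc_conv_rev)
  have i: "inj_on (\<lambda>(l, y::'a). l @ [y]) (LL k \<times> UNIV)" by (auto simp: inj_on_def)
  show ?thesis unfolding e sum.reindex[OF i] sum.cartesian_product by (simp add: case_prod_beta)
qed

lemma sum_LL_append:
  "(\<Sum>l\<in>LL (r + t). F l) = (\<Sum>l1\<in>LL r. \<Sum>l2\<in>LL t. F (l1 @ l2 :: 'a::finite list))"
proof (induction r arbitrary: F)
  case 0 then show ?case by (simp add: LL_0)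
next
  case (Suc r)
  have "(\<Sum>l\<in>LL (Suc r + t). F l) = (\<Sum>y\<in>UNIV. \<Sum>l\<in>LL (r + t). F (y # l))"
    by (simp add: sum_LL_Suc)
  also have "\<dots> = (\<Sum>y\<in>UNIV. \<Sum>l1\<in>LL r. \<Sum>l2\<in>LL t. F (y # l1 @ l2))"
    using Suc.IH[of "\<lambda>l. F (_ # l)"] by simp
  also have "\<dots> = (\<Sum>l1\<in>LL (Suc r). \<Sum>l2\<in>LL t. F (l1 @ l2))"
    by (simp add: sum_LL_Suc)
  finally show ?case .
qed

lemma sum_LL_prod:
  "(\<Sum>l\<in>LL r. \<Prod>i<r. h i (l ! i)) = (\<Prod>i<r. \<Sum>y\<in>(UNIV::'a::finite set). (h i y :: real))"
proof (induction r arbitrary: h)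
  case 0 then show ?case by (simp add: LL_0)
next
  case (Suc r)
  have "(\<Sum>l\<in>LL (Suc r). \<Prod>i<Suc r. h i (l ! i)) = (\<Sum>y\<in>UNIV. \<Sum>l\<in>LL r. h 0 y * (\<Prod>i<r. h (Suc i) (l ! i)))"
    unfolding sum_LL_Suc by (subst prod.lessThan_Suc_shift) simp
  also have "\<dots> = (\<Sum>y\<in>UNIV. h 0 y * (\<Prod>i<r. \<Sum>y\<in>UNIV. h (Suc i) y))"
    by (simp add: sum_distrib_left[symmetric] Suc.IH[of "\<lambda>i. h (Suc i)"])
  also have "\<dots> = (\<Prod>i<Suc r. \<Sum>y\<in>UNIV. h i y)"
    by (subst prod.lessThan_Suc_shift) (simp add: sum_distrib_right)
  finally show ?case .
qed

fun sel :: "bool \<Rightarrow> bool list \<Rightarrow> 'a list \<Rightarrow> 'a list" where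
  "sel b (c # cs) (x # xs) = (if c = b then x # sel b cs xs else sel b cs xs)"
| "sel b _ _ = []"

definition cnt :: "bool \<Rightarrow> bool list \<Rightarrow> nat" where "cnt b cs = length (filter (\<lambda>c. c = b) cs)"

lemma cnt_simps[simp]: "cnt b [] = 0" "cnt b (c # cs) = (if c = b then Suc (cnt b cs) else cnt b cs)"
  unfolding cnt_def by auto

lemma length_sel: "length cs = length l \<Longrightarrow> length (sel b cs l) = cnt b cs"
  by (induction b cs l rule: sel.induct) auto

lemma sel_snoc: "length cs = length l \<Longrightarrow> sel b (cs @ [t]) (l @ [y]) = (if t = b then sel b cs l @ [y] else sel b cs l)"
  by (induction b cs l rule: sel.induct) auto

lemma cnt_snoc: "cnt b (cs @ [t]) = (if t = b then Suc (cnt b cs) else cnt b cs)"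
  unfolding cnt_def by auto

lemma sel_replicate_same: "length l = q \<Longrightarrow> sel b (replicate q b) l = l"
  by (induction l arbitrary: q) auto

lemma sel_replicate_other: "length l = q \<Longrightarrow> b \<noteq> c \<Longrightarrow> sel b (replicate q c) l = []"
  by (induction l arbitrary: q) auto

lemma cnt_zero_iff: "length cs = q \<Longrightarrow> cnt b cs = 0 \<longleftrightarrow> cs = replicate q (\<not> b)"
  unfolding cnt_def by (induction cs arbitrary: q) auto

lemma cnt_sum: "cnt True cs + cnt False cs = length cs"
  by (induction cs) auto

lemma sum_LL_sel:
  fixes f :: "'a::finite list \<Rightarrow> real"
  assumes "length cs = k"
  shows "(\<Sum>l\<in>LL k. f (sel True cs l) * g (sel False cs l)) =
         (\<Sum>l1\<in>LL (cnt True cs). f l1) * (\<Sum>l2\<in>LL (cnt False cs). (g l2 :: real))"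
  using assms
proof (induction cs arbitrary: k f g)
  case Nil then show ?case by (simp add: LL_0)
next
  case (Cons c cs)
  then obtain k' where k: "k = Suc k'" "length cs = k'" by auto
  show ?case
  proof (cases c)
    case True
    have "(\<Sum>l\<in>LL k. f (sel True (c # cs) l) * g (sel False (c # cs) l))
        = (\<Sum>y\<in>UNIV. \<Sum>l\<in>LL k'. f (y # sel True cs l) * g (sel False cs l))"
      unfolding k(1) sum_LL_Suc using True by simp
    also have "\<dots> = (\<Sum>y\<in>UNIV. (\<Sum>l1\<in>LL (cnt True cs). f (y # l1)) * (\<Sum>l2\<in>LL (cnt False cs). g l2))"
      by (rule sum.cong[OF refl]) (rule Cons.IH[OF k(2)])
    also have "\<dots> = (\<Sum>l1\<in>LL (cnt True (c # cs)). f l1) * (\<Sum>l2\<in>LL (cnt False (c # cs)). g l2)"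
      using True by (simp add: sum_LL_Suc sum_distrib_right)
    finally show ?thesis .
  next
    case False
    have "(\<Sum>l\<in>LL k. f (sel True (c # cs) l) * g (sel False (c # cs) l))
        = (\<Sum>y\<in>UNIV. \<Sum>l\<in>LL k'. f (sel True cs l) * g (y # sel False cs l))"
      unfolding k(1) sum_LL_Suc using False by simp
    also have "\<dots> = (\<Sum>y\<in>UNIV. (\<Sum>l1\<in>LL (cnt True cs). f l1) * (\<Sum>l2\<in>LL (cnt False cs). g (y # l2)))"
      by (rule sum.cong[OF refl]) (rule Cons.IH[OF k(2)])
    also have "\<dots> = (\<Sum>l1\<in>LL (cnt True (c # cs)). f l1) * (\<Sum>l2\<in>LL (cnt False (c # cs)). g l2)"
      using False by (simp add: sum_LL_Suc sum_distrib_left)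
    finally show ?thesis .
  qed
qed

definition pw :: "('a \<Rightarrow> real) \<Rightarrow> 'a list \<Rightarrow> real" where "pw W l = prod_list (map W l)"

lemma pw_simps[simp]: "pw W [] = 1" "pw W (y # l) = W y * pw W l" "pw W (l @ [y]) = pw W l * W y"
  unfolding pw_def by auto

lemma pw_sel: "length cs = length l \<Longrightarrow> pw W l = pw W (sel True cs l) * pw W (sel False cs l)"
  by (induction True cs l rule: sel.induct) (auto simp: algebra_simps)

lemma pw_nth: "pw W l = (\<Prod>i<length l. W (l ! i))"
  unfolding pw_def by (induction l) (simp_all add: prod.lessThan_Suc_shift del: prod.lessThan_Suc)

section \<open>Covariant derivative: basic rules\<close>

definition LC :: "(real^'n::finite \<Rightarrow> 'n \<Rightarrow> 'n \<Rightarrow> real) \<Rightarrow> real^'n \<Rightarrow> 'n \<Rightarrow> ('n list \<Rightarrow> real) \<Rightarrow> 'n list \<Rightarrow> real" where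
  "LC g x a \<phi> ls = (\<Sum>j<length ls. \<Sum>c\<in>UNIV. christoffel g x c a (ls ! j) * \<phi> (ls[j := c]))"

lemma nabla_Nil: "nabla g T ups [] x = 0"
  unfolding nabla_def by simp

lemma nabla_Cons: "nabla g T ups (a # ls) x = pd a (T ups ls) x
   + (\<Sum>i<length ups. \<Sum>c\<in>UNIV. christoffel g x (ups ! i) a c * T (ups[i := c]) ls x)
   - LC g x a (\<lambda>l. T ups l x) ls"
  unfolding nabla_def LC_def by simp

lemma nabla_Cons0: "nabla g T [] (a # ls) x = pd a (T [] ls) x - LC g x a (\<lambda>l. T [] l x) ls"
  by (simp add: nabla_Cons)

lemma nabla_Cons1: "nabla g T [c] (a # ls) x = pd a (T [c] ls) x
   + (\<Sum>e\<in>UNIV. christoffel g x c a e * T [e] ls x) - LC g x a (\<lambda>l. T [c] l x) ls"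
  by (simp add: nabla_Cons)

lemma nablas_0[simp]: "nablas g 0 T = T" unfolding nablas_def by simp
lemma nablas_Suc: "nablas g (Suc k) T = nabla g (nablas g k T)" unfolding nablas_def by simp
lemma nablas_Suc_right: "nablas g (Suc k) T = nablas g k (nabla g T)"
  unfolding nablas_def by (simp add: funpow_swap1)

lemma LC_Nil[simp]: "LC g x a \<phi> [] = 0" unfolding LC_def by simp

lemma LC_cong:
  assumes "\<And>l. length l = length ls \<Longrightarrow> \<phi> l = \<psi> l"
  shows "LC g x a \<phi> ls = LC g x a \<psi> ls"
  unfolding LC_def using assms by (intro sum.cong refl) auto

lemma LC_Cons: "LC g x a \<phi> (y # ls) = (\<Sum>e\<in>UNIV. christoffel g x e a y * \<phi> (e # ls)) + LC g x a (\<lambda>l. \<phi> (y # l)) ls"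
  unfolding LC_def by (simp add: sum.lessThan_Suc_shift del: sum.lessThan_Suc)

lemma LC_snoc: "LC g x a \<phi> (ls @ [y]) = LC g x a (\<lambda>l. \<phi> (l @ [y])) ls + (\<Sum>e\<in>UNIV. christoffel g x e a y * \<phi> (ls @ [e]))"
proof -
  have "LC g x a \<phi> (ls @ [y]) = (\<Sum>j<length ls. \<Sum>c\<in>UNIV. christoffel g x c a ((ls @ [y]) ! j) * \<phi> ((ls @ [y])[j := c]))
       + (\<Sum>c\<in>UNIV. christoffel g x c a y * \<phi> (ls @ [c]))"
    unfolding LC_def by (simp add: list_update_append)
  also have "(\<Sum>j<length ls. \<Sum>c\<in>UNIV. christoffel g x c a ((ls @ [y]) ! j) * \<phi> ((ls @ [y])[j := c]))
      = LC g x a (\<lambda>l. \<phi> (l @ [y])) ls"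
    unfolding LC_def by (intro sum.cong refl) (simp add: nth_append list_update_append)
  finally show ?thesis .
qed

lemma LC_sum: "LC g x a (\<lambda>l. \<Sum>i\<in>I. \<phi> i l) ls = (\<Sum>i\<in>I. LC g x a (\<phi> i) ls)"
proof -
  have "LC g x a (\<lambda>l. \<Sum>i\<in>I. \<phi> i l) ls = (\<Sum>j<length ls. \<Sum>c\<in>UNIV. \<Sum>i\<in>I. christoffel g x c a (ls ! j) * \<phi> i (ls[j := c]))"
    unfolding LC_def by (simp add: sum_distrib_left)
  also have "\<dots> = (\<Sum>j<length ls. \<Sum>i\<in>I. \<Sum>c\<in>UNIV. christoffel g x c a (ls ! j) * \<phi> i (ls[j := c]))"
    by (rule sum.cong[OF refl], rule sum.swap)
  also have "\<dots> = (\<Sum>i\<in>I. LC g x a (\<phi> i) ls)"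
    unfolding LC_def by (rule sum.swap)
  finally show ?thesis .
qed

lemma LC_cmult: "LC g x a (\<lambda>l. k * \<phi> l) ls = k * LC g x a \<phi> ls"
  unfolding LC_def by (simp add: sum_distrib_left mult.left_commute)

lemma LC_multc: "LC g x a (\<lambda>l. \<phi> l * k) ls = LC g x a \<phi> ls * k"
  unfolding LC_def by (simp add: sum_distrib_right mult.assoc)

lemma LC_add: "LC g x a (\<lambda>l. \<phi> l + \<psi> l) ls = LC g x a \<phi> ls + LC g x a \<psi> ls"
  unfolding LC_def by (simp add: distrib_left sum.distrib)

lemma LC_prod:
  assumes "length cs = length ls"
  shows "LC g x a (\<lambda>l. \<alpha> (sel True cs l) * \<beta> (sel False cs l)) ls
       = LC g x a \<alpha> (sel True cs ls) * \<beta> (sel False cs ls) + \<alpha> (sel True cs ls) * LC g x a \<beta> (sel False cs ls)"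
  using assms
proof (induction cs arbitrary: ls \<alpha> \<beta>)
  case Nil then show ?case by simp
next
  case (Cons c cs)
  then obtain y ls' where ls: "ls = y # ls'" "length cs = length ls'" by (cases ls) auto
  show ?case
  proof (cases c)
    case True
    have "LC g x a (\<lambda>l. \<alpha> (sel True (c # cs) l) * \<beta> (sel False (c # cs) l)) ls
      = (\<Sum>e\<in>UNIV. christoffel g x e a y * (\<alpha> (e # sel True cs ls') * \<beta> (sel False cs ls')))
        + LC g x a (\<lambda>l. \<alpha> (y # sel True cs l) * \<beta> (sel False cs l)) ls'"
      unfolding ls(1) LC_Cons using True by simp
    also have "LC g x a (\<lambda>l. \<alpha> (y # sel True cs l) * \<beta> (sel False cs l)) ls'
      = LC g x a (\<lambda>m. \<alpha> (y # m)) (sel True cs ls') * \<beta> (sel False cs ls') + \<alpha> (y # sel True cs ls') * LC g x a \<beta> (sel False cs ls')"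
      by (rule Cons.IH[OF ls(2)])
    finally show ?thesis unfolding ls(1) using True
      by (simp add: LC_Cons sum_distrib_right sum_distrib_left algebra_simps)
  next
    case False
    have "LC g x a (\<lambda>l. \<alpha> (sel True (c # cs) l) * \<beta> (sel False (c # cs) l)) ls
      = (\<Sum>e\<in>UNIV. christoffel g x e a y * (\<alpha> (sel True cs ls') * \<beta> (e # sel False cs ls')))
        + LC g x a (\<lambda>l. \<alpha> (sel True cs l) * \<beta> (y # sel False cs l)) ls'"
      unfolding ls(1) LC_Cons using False by simp
    also have "LC g x a (\<lambda>l. \<alpha> (sel True cs l) * \<beta> (y # sel False cs l)) ls'
      = LC g x a \<alpha> (sel True cs ls') * \<beta> (y # sel False cs ls') + \<alpha> (sel True cs ls') * LC g x a (\<lambda>m. \<beta> (y # m)) (sel False cs ls')"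
      by (rule Cons.IH[OF ls(2)])
    finally show ?thesis unfolding ls(1) using False
      by (simp add: LC_Cons sum_distrib_right sum_distrib_left algebra_simps)
  qed
qed

definition stens :: "(real^'n::finite) set \<Rightarrow> 'n tensor \<Rightarrow> bool" where
  "stens U T \<longleftrightarrow> (\<forall>ups ls. smooth_on U (T ups ls))"

lemma nabla_stens:
  assumes m: "riem_metric U g" and T: "stens U T"
  shows "stens U (nabla g T)"
  unfolding stens_def
proof (intro allI)
  fix ups ls
  have U: "open U" by (rule metric_open[OF m])
  show "smooth_on U (nabla g T ups ls)"
  proof (cases ls)
    case Nil
    then have "nabla g T ups ls = (\<lambda>x. 0)" by (simp add: fun_eq_iff nabla_Nil)
    then show ?thesis by (simp add: smooth_const)
  next
    case (Cons a l)
    have "nabla g T ups ls = (\<lambda>x. pd a (T ups l) x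
       + (\<Sum>i<length ups. \<Sum>c\<in>UNIV. christoffel g x (ups ! i) a c * T (ups[i := c]) l x)
       - (\<Sum>j<length l. \<Sum>c\<in>UNIV. christoffel g x c a (l ! j) * T ups (l[j := c]) x))"
      unfolding Cons by (simp add: fun_eq_iff nabla_Cons LC_def)
    moreover have "smooth_on U (\<lambda>x. pd a (T ups l) x
       + (\<Sum>i<length ups. \<Sum>c\<in>UNIV. christoffel g x (ups ! i) a c * T (ups[i := c]) l x)
       - (\<Sum>j<length l. \<Sum>c\<in>UNIV. christoffel g x c a (l ! j) * T ups (l[j := c]) x))"
      using T unfolding stens_def
      by (intro smooth_diff[OF U] smooth_add[OF U] smooth_sum[OF U] smooth_mult[OF U]
          smooth_pd christoffel_smooth[OF m]) auto
    ultimately show ?thesis by simp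
  qed
qed

lemma nablas_stens:
  assumes m: "riem_metric U g" and T: "stens U T"
  shows "stens U (nablas g k T)"
  by (induction k) (simp_all add: T nablas_Suc nabla_stens[OF m])

lemma stens_diffble: "stens U T \<Longrightarrow> x \<in> U \<Longrightarrow> T ups ls differentiable (at x)"
  unfolding stens_def by (blast intro: smooth_diffble)

lemma sum3_lin:
  "(\<Sum>a\<in>A. \<Sum>b\<in>B. f a b * (\<Sum>i\<in>I. c i * h i a b)) = (\<Sum>i\<in>I. c i * (\<Sum>a\<in>A. \<Sum>b\<in>B. f a b * h i a b)) "
  for f :: "_ \<Rightarrow> _ \<Rightarrow> real"
proof -
  have "(\<Sum>a\<in>A. \<Sum>b\<in>B. f a b * (\<Sum>i\<in>I. c i * h i a b)) = (\<Sum>a\<in>A. \<Sum>b\<in>B. \<Sum>i\<in>I. c i * (f a b * h i a b))"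
    by (simp add: sum_distrib_left mult.left_commute)
  also have "\<dots> = (\<Sum>a\<in>A. \<Sum>i\<in>I. \<Sum>b\<in>B. c i * (f a b * h i a b))"
    by (rule sum.cong[OF refl], rule sum.swap)
  also have "\<dots> = (\<Sum>i\<in>I. \<Sum>a\<in>A. \<Sum>b\<in>B. c i * (f a b * h i a b))"
    by (rule sum.swap)
  also have "\<dots> = (\<Sum>i\<in>I. c i * (\<Sum>a\<in>A. \<Sum>b\<in>B. f a b * h i a b))"
    by (simp add: sum_distrib_left)
  finally show ?thesis .
qed

lemma nablas_lin:
  assumes m: "riem_metric U g" and fin: "finite I" and T: "\<And>i. i \<in> I \<Longrightarrow> stens U (T i)"
  shows "x \<in> U \<Longrightarrow> nablas g k (\<lambda>ups ls y. \<Sum>i\<in>I. c i * T i ups ls y) ups ls x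
           = (\<Sum>i\<in>I. c i * nablas g k (T i) ups ls x)"
proof (induction k arbitrary: ups ls x)
  case 0 then show ?case by simp
next
  case (Suc k)
  have U: "open U" by (rule metric_open[OF m])
  let ?S = "(\<lambda>ups ls y. \<Sum>i\<in>I. c i * T i ups ls y)"
  show ?case
  proof (cases ls)
    case Nil then show ?thesis by (simp add: nablas_Suc nabla_Nil)
  next
    case (Cons a l)
    have dT: "\<And>i ups l. i \<in> I \<Longrightarrow> nablas g k (T i) ups l differentiable (at x)"
      using stens_diffble[OF nablas_stens[OF m T] Suc.prems] by blast
    have p: "pd a (nablas g k ?S ups l) x = (\<Sum>i\<in>I. c i * pd a (nablas g k (T i) ups l) x)"
    proof -
      have "pd a (nablas g k ?S ups l) x = pd a (\<lambda>y. \<Sum>i\<in>I. c i * nablas g k (T i) ups l y) x"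
        by (rule pd_local[OF U Suc.prems]) (rule Suc.IH)
      also have "\<dots> = (\<Sum>i\<in>I. pd a (\<lambda>y. c i * nablas g k (T i) ups l y) x)"
        by (rule pd_sum) (auto intro: dT)
      also have "\<dots> = (\<Sum>i\<in>I. c i * pd a (nablas g k (T i) ups l) x)"
        by (rule sum.cong[OF refl]) (rule pd_cmult[OF dT])
      finally show ?thesis .
    qed
    have u: "(\<Sum>j<length ups. \<Sum>e\<in>UNIV. christoffel g x (ups ! j) a e * nablas g k ?S (ups[j := e]) l x)
       = (\<Sum>i\<in>I. c i * (\<Sum>j<length ups. \<Sum>e\<in>UNIV. christoffel g x (ups ! j) a e * nablas g k (T i) (ups[j := e]) l x))"
      using Suc.IH[OF Suc.prems] by (simp add: sum3_lin)
    have lc: "LC g x a (\<lambda>l'. nablas g k ?S ups l' x) l = (\<Sum>i\<in>I. c i * LC g x a (\<lambda>l'. nablas g k (T i) ups l' x) l)"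
      using Suc.IH[OF Suc.prems] by (simp add: LC_sum LC_cmult)
    show ?thesis unfolding Cons nablas_Suc nabla_Cons p u lc
      by (simp add: sum_distrib_left[symmetric] sum.distrib sum_subtractf algebra_simps)
  qed
qed

section \<open>Leibniz rule for a contraction\<close>

definition PT :: "(real^'n::finite \<Rightarrow> 'n \<Rightarrow> 'n \<Rightarrow> real) \<Rightarrow> 'n tensor \<Rightarrow> 'n tensor \<Rightarrow> bool list \<Rightarrow> 'n list \<Rightarrow> real^'n \<Rightarrow> real" where
  "PT g A B cs ls x = (\<Sum>c\<in>UNIV. nablas g (cnt True cs) A [c] (sel True cs ls) x
                                 * nablas g (cnt False cs) B [] (sel False cs ls @ [c]) x)"

lemma christ_cancel:
  "(\<Sum>c\<in>UNIV. (\<Sum>e\<in>UNIV. christoffel g x c a e * NA e) * NB c)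
   = (\<Sum>c\<in>UNIV. NA c * (\<Sum>e\<in>UNIV. christoffel g x e a c * NB e))"
proof -
  have "(\<Sum>c\<in>UNIV. (\<Sum>e\<in>UNIV. christoffel g x c a e * NA e) * NB c)
      = (\<Sum>c\<in>UNIV. \<Sum>e\<in>UNIV. NA e * (christoffel g x c a e * NB c))"
    unfolding sum_distrib_right by (intro sum.cong refl) (simp add: mult_ac)
  also have "\<dots> = (\<Sum>e\<in>UNIV. \<Sum>c\<in>UNIV. NA e * (christoffel g x c a e * NB c))"
    by (rule sum.swap)
  also have "\<dots> = (\<Sum>c\<in>UNIV. NA c * (\<Sum>e\<in>UNIV. christoffel g x e a c * NB e))"
    by (simp only: sum_distrib_left)
  finally show ?thesis .
qed

lemma leibniz_step:
  assumes m: "riem_metric U g" and A: "stens U A" and B: "stens U B" and x: "x \<in> U"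
    and len: "length cs = length ls"
  shows "pd a (PT g A B cs ls) x - LC g x a (\<lambda>l. PT g A B cs l x) ls
       = PT g A B (True # cs) (a # ls) x + PT g A B (False # cs) (a # ls) x"
proof -
  define i where "i = cnt True cs"
  define j where "j = cnt False cs"
  define L1 where "L1 = sel True cs ls"
  define L2 where "L2 = sel False cs ls"
  define NA where "NA c = nablas g i A [c] L1" for c
  define NB where "NB c = nablas g j B [] (L2 @ [c])" for c
  define \<alpha> where "\<alpha> c m = nablas g i A [c] m x" for c m
  define \<beta> where "\<beta> c m = nablas g j B [] (m @ [c]) x" for c m
  have \<alpha>f: "\<alpha> c = (\<lambda>m. nablas g i A [c] m x)" for c by (simp add: fun_eq_iff \<alpha>_def)
  have \<beta>f: "\<beta> c = (\<lambda>m. nablas g j B [] (m @ [c]) x)" for c by (simp add: fun_eq_iff \<beta>_def)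
  have dA: "NA c differentiable (at x)" for c unfolding NA_def by (rule stens_diffble[OF nablas_stens[OF m A] x])
  have dB: "NB c differentiable (at x)" for c unfolding NB_def by (rule stens_diffble[OF nablas_stens[OF m B] x])
  have PTf: "PT g A B cs = (\<lambda>ls y. \<Sum>c\<in>UNIV. nablas g i A [c] (sel True cs ls) y * nablas g j B [] (sel False cs ls @ [c]) y)"
    unfolding PT_def i_def j_def by (simp add: fun_eq_iff)
  have P1: "pd a (PT g A B cs ls) x = (\<Sum>c\<in>UNIV. pd a (NA c) x * NB c x + NA c x * pd a (NB c) x)"
  proof -
    have "pd a (PT g A B cs ls) x = pd a (\<lambda>y. \<Sum>c\<in>UNIV. NA c y * NB c y) x"
      unfolding PTf NA_def NB_def L1_def L2_def ..
    also have "\<dots> = (\<Sum>c\<in>UNIV. pd a (\<lambda>y. NA c y * NB c y) x)"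
      by (rule pd_sum) (auto intro: differentiable_mult dA dB)
    also have "\<dots> = (\<Sum>c\<in>UNIV. pd a (NA c) x * NB c x + NA c x * pd a (NB c) x)"
      by (rule sum.cong[OF refl]) (rule pd_mult[OF dA dB])
    finally show ?thesis .
  qed
  have P2: "LC g x a (\<lambda>l. PT g A B cs l x) ls
      = (\<Sum>c\<in>UNIV. LC g x a (\<alpha> c) L1 * NB c x + NA c x * LC g x a (\<beta> c) L2)"
  proof -
    have "LC g x a (\<lambda>l. PT g A B cs l x) ls = LC g x a (\<lambda>l. \<Sum>c\<in>UNIV. \<alpha> c (sel True cs l) * \<beta> c (sel False cs l)) ls"
      unfolding PTf \<alpha>_def \<beta>_def ..
    also have "\<dots> = (\<Sum>c\<in>UNIV. LC g x a (\<lambda>l. \<alpha> c (sel True cs l) * \<beta> c (sel False cs l)) ls)"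
      by (rule LC_sum)
    also have "\<dots> = (\<Sum>c\<in>UNIV. LC g x a (\<alpha> c) L1 * \<beta> c L2 + \<alpha> c L1 * LC g x a (\<beta> c) L2)"
      unfolding L1_def L2_def by (rule sum.cong[OF refl]) (rule LC_prod[OF len])
    also have "\<dots> = (\<Sum>c\<in>UNIV. LC g x a (\<alpha> c) L1 * NB c x + NA c x * LC g x a (\<beta> c) L2)"
      unfolding NA_def NB_def \<alpha>_def \<beta>_def ..
    finally show ?thesis .
  qed
  have P3: "PT g A B (True # cs) (a # ls) x
      = (\<Sum>c\<in>UNIV. (pd a (NA c) x + (\<Sum>e\<in>UNIV. christoffel g x c a e * NA e x) - LC g x a (\<alpha> c) L1) * NB c x)"
    unfolding PT_def by (simp add: nablas_Suc nabla_Cons1 i_def j_def L1_def L2_def NA_def NB_def \<alpha>f)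
  have P4: "PT g A B (False # cs) (a # ls) x
      = (\<Sum>c\<in>UNIV. NA c x * (pd a (NB c) x - (LC g x a (\<beta> c) L2 + (\<Sum>e\<in>UNIV. christoffel g x e a c * NB e x))))"
    unfolding PT_def
    by (simp add: nablas_Suc nabla_Cons0 LC_snoc i_def j_def L1_def L2_def NA_def NB_def \<beta>f)
  have C: "(\<Sum>c\<in>UNIV. (\<Sum>e\<in>UNIV. christoffel g x c a e * NA e x) * NB c x)
     = (\<Sum>c\<in>UNIV. NA c x * (\<Sum>e\<in>UNIV. christoffel g x e a c * NB e x))"
    by (rule christ_cancel)
  show ?thesis unfolding P1 P2 P3 P4
    using C by (simp add: algebra_simps sum.distrib sum_subtractf)
qed

lemma PT_diffble:
  assumes m: "riem_metric U g" and A: "stens U A" and B: "stens U B" and x: "x \<in> U"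
  shows "PT g A B cs ls differentiable (at x)"
proof -
  have "PT g A B cs ls = (\<lambda>y. \<Sum>c\<in>UNIV. nablas g (cnt True cs) A [c] (sel True cs ls) y
                                 * nablas g (cnt False cs) B [] (sel False cs ls @ [c]) y)"
    by (simp add: fun_eq_iff PT_def)
  moreover have "(\<lambda>y. \<Sum>c\<in>UNIV. nablas g (cnt True cs) A [c] (sel True cs ls) y
                                 * nablas g (cnt False cs) B [] (sel False cs ls @ [c]) y) differentiable (at x)"
    by (rule differentiable_sum, simp, intro ballI differentiable_mult stens_diffble[OF nablas_stens[OF m A] x]
        stens_diffble[OF nablas_stens[OF m B] x])
  ultimately show ?thesis by simp
qed

lemma sum_bool: "(\<Sum>b\<in>(UNIV::bool set). F b) = F True + F False"
  by (simp add: UNIV_bool add.commute)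

lemma leibniz:
  assumes m: "riem_metric U g" and A: "stens U A" and B: "stens U B"
  shows "x \<in> U \<Longrightarrow> length ls = k \<Longrightarrow>
    nablas g k (\<lambda>ups ls y. \<Sum>c\<in>UNIV. A [c] [] y * B [] [c] y) [] ls x = (\<Sum>cs\<in>LL k. PT g A B cs ls x)"
proof (induction k arbitrary: ls x)
  case 0 then show ?case by (simp add: LL_0 PT_def)
next
  case (Suc k)
  have U: "open U" by (rule metric_open[OF m])
  let ?G = "(\<lambda>ups ls y. \<Sum>c\<in>UNIV. A [c] [] y * B [] [c] y)"
  obtain a l where ls: "ls = a # l" "length l = k" using Suc.prems(2) by (cases ls) auto
  have finLL: "finite (LL k :: bool list set)" by (rule finite_LL)
  have "nablas g (Suc k) ?G [] ls x = pd a (nablas g k ?G [] l) x - LC g x a (\<lambda>l'. nablas g k ?G [] l' x) l"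
    unfolding ls nablas_Suc nabla_Cons0 ..
  also have "pd a (nablas g k ?G [] l) x = pd a (\<lambda>y. \<Sum>cs\<in>LL k. PT g A B cs l y) x"
    by (rule pd_local[OF U Suc.prems(1)]) (rule Suc.IH[OF _ ls(2)])
  also have "\<dots> = (\<Sum>cs\<in>LL k. pd a (PT g A B cs l) x)"
    by (rule pd_sum) (rule PT_diffble[OF m A B Suc.prems(1)])
  also have "LC g x a (\<lambda>l'. nablas g k ?G [] l' x) l = LC g x a (\<lambda>l'. \<Sum>cs\<in>LL k. PT g A B cs l' x) l"
    by (rule LC_cong) (rule Suc.IH[OF Suc.prems(1)], simp add: ls(2))
  also have "\<dots> = (\<Sum>cs\<in>LL k. LC g x a (\<lambda>l'. PT g A B cs l' x) l)"
    by (rule LC_sum)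
  also have "(\<Sum>cs\<in>LL k. pd a (PT g A B cs l) x) - (\<Sum>cs\<in>LL k. LC g x a (\<lambda>l'. PT g A B cs l' x) l)
      = (\<Sum>cs\<in>LL k. PT g A B (True # cs) (a # l) x + PT g A B (False # cs) (a # l) x)"
    unfolding sum_subtractf[symmetric]
    by (rule sum.cong[OF refl]) (rule leibniz_step[OF m A B Suc.prems(1)], simp add: LL_def ls(2))
  also have "\<dots> = (\<Sum>cs\<in>LL (Suc k). PT g A B cs (a # l) x)"
    unfolding sum_LL_Suc sum_bool sum.distrib ..
  finally show ?case unfolding ls .
qed

section \<open>Raising an index commutes with covariant differentiation\<close>

lemma raise:
  assumes m: "riem_metric U g" and A: "stens U A" and B: "stens U B"
    and rel: "\<And>y c. y \<in> U \<Longrightarrow> A [c] [] y = (\<Sum>e\<in>UNIV. ginv g y c e * B [] [e] y)"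
  shows "x \<in> U \<Longrightarrow> length ls = k \<Longrightarrow>
    nablas g k A [c] ls x = (\<Sum>e\<in>UNIV. ginv g x c e * nablas g k B [] (ls @ [e]) x)"
proof (induction k arbitrary: ls x c)
  case 0 then show ?case using rel by simp
next
  case (Suc k)
  have U: "open U" by (rule metric_open[OF m])
  have x: "x \<in> U" by (rule Suc.prems(1))
  obtain a l where ls: "ls = a # l" "length l = k" using Suc.prems(2) by (cases ls) auto
  define Y where "Y e = nablas g k B [] (l @ [e])" for e
  have dY: "Y e differentiable (at x)" for e unfolding Y_def by (rule stens_diffble[OF nablas_stens[OF m B] x])
  have dG: "(\<lambda>y. ginv g y c e) differentiable (at x)" for c e by (rule ginv_diffble[OF m x])
  have L1: "pd a (nablas g k A [c] l) x = (\<Sum>e\<in>UNIV. pd a (\<lambda>y. ginv g y c e) x * Y e x + ginv g x c e * pd a (Y e) x)"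
  proof -
    have "pd a (nablas g k A [c] l) x = pd a (\<lambda>y. \<Sum>e\<in>UNIV. ginv g y c e * Y e y) x"
      unfolding Y_def by (rule pd_local[OF U x]) (rule Suc.IH[OF _ ls(2)])
    also have "\<dots> = (\<Sum>e\<in>UNIV. pd a (\<lambda>y. ginv g y c e * Y e y) x)"
      by (rule pd_sum) (auto intro: differentiable_mult dY dG)
    also have "\<dots> = (\<Sum>e\<in>UNIV. pd a (\<lambda>y. ginv g y c e) x * Y e x + ginv g x c e * pd a (Y e) x)"
      by (rule sum.cong[OF refl]) (rule pd_mult[OF dG dY])
    finally show ?thesis .
  qed
  have L2: "(\<Sum>e\<in>UNIV. christoffel g x c a e * nablas g k A [e] l x)
      = (\<Sum>e\<in>UNIV. christoffel g x c a e * (\<Sum>d\<in>UNIV. ginv g x e d * Y d x))"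
    unfolding Y_def using Suc.IH[OF x ls(2)] by simp
  have L3: "LC g x a (\<lambda>l'. nablas g k A [c] l' x) l = (\<Sum>e\<in>UNIV. ginv g x c e * LC g x a (\<lambda>l'. nablas g k B [] (l' @ [e]) x) l)"
  proof -
    have "LC g x a (\<lambda>l'. nablas g k A [c] l' x) l = LC g x a (\<lambda>l'. \<Sum>e\<in>UNIV. ginv g x c e * nablas g k B [] (l' @ [e]) x) l"
      by (rule LC_cong) (rule Suc.IH[OF x], simp add: ls(2))
    then show ?thesis by (simp add: LC_sum LC_cmult)
  qed
  have R: "nablas g (Suc k) B [] (ls @ [e]) x = pd a (Y e) x - (LC g x a (\<lambda>l'. nablas g k B [] (l' @ [e]) x) l
       + (\<Sum>d\<in>UNIV. christoffel g x d a e * Y d x))" for e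
    unfolding ls Y_def by (simp add: nablas_Suc nabla_Cons0 LC_snoc)
  have MC: "pd a (\<lambda>y. ginv g y c d) x + (\<Sum>e\<in>UNIV. christoffel g x c a e * ginv g x e d)
           + (\<Sum>e\<in>UNIV. christoffel g x d a e * ginv g x c e) = 0" for d
    by (rule metric_compat[OF m x])
  have Z: "(\<Sum>d\<in>UNIV. Y d x * (pd a (\<lambda>y. ginv g y c d) x + (\<Sum>e\<in>UNIV. christoffel g x c a e * ginv g x e d)
           + (\<Sum>e\<in>UNIV. christoffel g x d a e * ginv g x c e))) = 0"
    using MC by simp
  have S1: "(\<Sum>d\<in>UNIV. Y d x * (\<Sum>e\<in>UNIV. christoffel g x c a e * ginv g x e d))
      = (\<Sum>e\<in>UNIV. christoffel g x c a e * (\<Sum>d\<in>UNIV. ginv g x e d * Y d x))"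
    by (simp add: sum_distrib_left mult_ac) (rule sum.swap)
  have S2: "(\<Sum>d\<in>UNIV. Y d x * (\<Sum>e\<in>UNIV. christoffel g x d a e * ginv g x c e))
      = (\<Sum>e\<in>UNIV. ginv g x c e * (\<Sum>d\<in>UNIV. christoffel g x d a e * Y d x))"
    by (simp add: sum_distrib_left mult_ac) (rule sum.swap)
  have Z': "(\<Sum>e\<in>UNIV. pd a (\<lambda>y. ginv g y c e) x * Y e x)
     + (\<Sum>e\<in>UNIV. christoffel g x c a e * (\<Sum>d\<in>UNIV. ginv g x e d * Y d x))
     + (\<Sum>e\<in>UNIV. ginv g x c e * (\<Sum>d\<in>UNIV. christoffel g x d a e * Y d x)) = 0"
    using Z unfolding S1[symmetric] S2[symmetric] by (simp add: distrib_left sum.distrib mult.commute)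
  have LHS: "nablas g (Suc k) A [c] ls x = pd a (nablas g k A [c] l) x
      + (\<Sum>e\<in>UNIV. christoffel g x c a e * nablas g k A [e] l x) - LC g x a (\<lambda>l'. nablas g k A [c] l' x) l"
    by (simp add: ls(1) nablas_Suc nabla_Cons1)
  show ?case
    unfolding LHS R L1 L2 L3
    using Z' by (simp add: algebra_simps sum.distrib sum_subtractf sum_distrib_left)
qed

definition symL :: "(real^'n::finite) set \<Rightarrow> 'n tensor \<Rightarrow> nat \<Rightarrow> bool" where
  "symL U T n \<longleftrightarrow> (\<forall>l b c y. length l = n \<longrightarrow> y \<in> U \<longrightarrow> T [] (l @ [b, c]) y = T [] (l @ [c, b]) y)"

lemma LC_snoc2: "LC g x a \<phi> (l @ [b, c]) = LC g x a (\<lambda>m. \<phi> (m @ [b, c])) l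
   + (\<Sum>e\<in>UNIV. christoffel g x e a b * \<phi> (l @ [e, c])) + (\<Sum>e\<in>UNIV. christoffel g x e a c * \<phi> (l @ [b, e]))"
proof -
  have "LC g x a \<phi> (l @ [b, c]) = LC g x a \<phi> ((l @ [b]) @ [c])" by simp
  also have "\<dots> = LC g x a (\<lambda>m. \<phi> (m @ [c])) (l @ [b]) + (\<Sum>e\<in>UNIV. christoffel g x e a c * \<phi> ((l @ [b]) @ [e]))"
    by (rule LC_snoc)
  also have "LC g x a (\<lambda>m. \<phi> (m @ [c])) (l @ [b]) = LC g x a (\<lambda>m. \<phi> ((m @ [b]) @ [c])) l
      + (\<Sum>e\<in>UNIV. christoffel g x e a b * \<phi> ((l @ [e]) @ [c]))"
    by (rule LC_snoc)
  finally show ?thesis by simp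
qed

lemma nabla_symL:
  assumes m: "riem_metric U g" and S: "symL U T n"
  shows "symL U (nabla g T) (Suc n)"
  unfolding symL_def
proof (intro allI impI)
  fix l :: "'a list" and b c y assume l: "length l = Suc n" and y: "y \<in> U"
  have U: "open U" by (rule metric_open[OF m])
  obtain a l' where l': "l = a # l'" "length l' = n" using l by (cases l) auto
  have S': "\<And>m b c. length m = n \<Longrightarrow> T [] (m @ [b, c]) y = T [] (m @ [c, b]) y"
    using S y unfolding symL_def by blast
  have P: "pd a (T [] (l' @ [b, c])) y = pd a (T [] (l' @ [c, b])) y"
    by (rule pd_local[OF U y]) (use S l'(2) in \<open>auto simp: symL_def\<close>)
  have Lc: "LC g y a (\<lambda>m. T [] (m @ [b, c]) y) l' = LC g y a (\<lambda>m. T [] (m @ [c, b]) y) l'"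
    by (rule LC_cong) (rule S', simp add: l'(2))
  have L: "LC g y a (\<lambda>m. T [] m y) (l' @ [b, c]) = LC g y a (\<lambda>m. T [] m y) (l' @ [c, b])"
    unfolding LC_snoc2 Lc using S'[OF l'(2)] by simp
  show "nabla g T [] (l @ [b, c]) y = nabla g T [] (l @ [c, b]) y"
    unfolding l'(1) by (simp add: nabla_Cons0 P L)
qed

lemma nablas_symL:
  assumes m: "riem_metric U g" and S: "symL U T n"
  shows "symL U (nablas g k T) (n + k)"
  by (induction k) (simp_all add: S nablas_Suc nabla_symL[OF m])

section \<open>The contracted vector fields\<close>

definition Wl :: "('k::finite \<Rightarrow> real^'n::finite \<Rightarrow> real) \<Rightarrow> ('k \<Rightarrow> real) \<Rightarrow> 'n tensor" where
  "Wl s v ups ls x = (\<Sum>\<gamma>\<in>UNIV. v \<gamma> * nlow s x (last ls) \<gamma>)"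

definition Wu :: "(real^'n::finite \<Rightarrow> 'n \<Rightarrow> 'n \<Rightarrow> real) \<Rightarrow> ('k::finite \<Rightarrow> real^'n \<Rightarrow> real) \<Rightarrow> ('k \<Rightarrow> real) \<Rightarrow> 'n tensor" where
  "Wu g s v ups ls x = (\<Sum>\<gamma>\<in>UNIV. v \<gamma> * nup g s x (hd ups) \<gamma>)"

definition wu :: "(real^'n::finite \<Rightarrow> 'n \<Rightarrow> 'n \<Rightarrow> real) \<Rightarrow> ('k::finite \<Rightarrow> real^'n \<Rightarrow> real) \<Rightarrow> ('k \<Rightarrow> real) \<Rightarrow> real^'n \<Rightarrow> 'n \<Rightarrow> real" where
  "wu g s v x c = (\<Sum>\<gamma>\<in>UNIV. v \<gamma> * nup g s x c \<gamma>)"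

definition wl :: "('k::finite \<Rightarrow> real^'n::finite \<Rightarrow> real) \<Rightarrow> ('k \<Rightarrow> real) \<Rightarrow> real^'n \<Rightarrow> 'n \<Rightarrow> real" where
  "wl s v x c = (\<Sum>\<gamma>\<in>UNIV. v \<gamma> * nlow s x c \<gamma>)"

lemma Wu_base[simp]: "Wu g s v [c] ls x = wu g s v x c" unfolding Wu_def wu_def by simp
lemma Wl_base[simp]: "Wl s v ups (l @ [c]) x = wl s v x c" unfolding Wl_def wl_def by simp
lemma Wl_base1[simp]: "Wl s v ups [c] x = wl s v x c" unfolding Wl_def wl_def by simp

lemma defmap_smooth: "defining_map U s \<Lambda> \<Longrightarrow> smooth_on U (s \<gamma>)"
  unfolding defining_map_def by blast

lemma nlow_smooth: "defining_map U s \<Lambda> \<Longrightarrow> smooth_on U (\<lambda>x. nlow s x c \<gamma>)"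
  unfolding nlow_def using smooth_pd[OF defmap_smooth] by (metis eta_contract_eq)

lemma nup_smooth: "riem_metric U g \<Longrightarrow> defining_map U s \<Lambda> \<Longrightarrow> smooth_on U (\<lambda>x. nup g s x c \<gamma>)"
  unfolding nup_def by (intro smooth_sum[OF metric_open] smooth_mult[OF metric_open] ginv_smooth nlow_smooth) auto

lemma Wl_stens: "riem_metric U g \<Longrightarrow> defining_map U s \<Lambda> \<Longrightarrow> stens U (Wl s v)"
  unfolding stens_def Wl_def
  by (intro allI smooth_sum[OF metric_open] smooth_mult[OF metric_open] smooth_const nlow_smooth) auto

lemma Wu_stens: "riem_metric U g \<Longrightarrow> defining_map U s \<Lambda> \<Longrightarrow> stens U (Wu g s v)"
  unfolding stens_def Wu_def
  by (intro allI smooth_sum[OF metric_open] smooth_mult[OF metric_open] smooth_const nup_smooth) auto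

lemma wu_wl: "wu g s v x c = (\<Sum>e\<in>UNIV. ginv g x c e * wl s v x e)"
  unfolding wu_def wl_def nup_def
  by (simp add: sum_distrib_left mult_ac) (rule sum.swap)

lemma wl_wu:
  assumes m: "riem_metric U g" and x: "x \<in> U"
  shows "(\<Sum>c\<in>UNIV. ginv g x c e * wl s v x c) = wu g s v x e"
  unfolding wu_wl using ginv_sym[OF m x] by simp

lemma Wu_rel: "Wu g s v [c] [] y = (\<Sum>e\<in>UNIV. ginv g y c e * Wl s v [] [e] y)"
  by (simp add: wu_wl)

lemma Wl_symL:
  fixes s :: "'k::finite \<Rightarrow> real^'n::finite \<Rightarrow> real"
  assumes m: "riem_metric U g" and d: "defining_map U s \<Lambda>"
  shows "symL U (nabla g (Wl s v)) 0"
  unfolding symL_def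
proof (intro allI impI)
  fix l :: "'n list" and b c y assume l: "length l = 0" and y: "y \<in> U"
  have U: "open U" by (rule metric_open[OF m])
  have l0: "l = []" using l by simp
  have dd: "(\<lambda>x. pd c (s \<gamma>) x) differentiable (at y)" for c \<gamma>
    using smooth_diffble[OF smooth_pd[OF defmap_smooth[OF d]] y] by (metis eta_contract_eq)
  have P: "pd b (Wl s v [] [c]) y = (\<Sum>\<gamma>\<in>UNIV. v \<gamma> * pd b (pd c (s \<gamma>)) y)" for b c
  proof -
    have "pd b (Wl s v [] [c]) y = pd b (\<lambda>x. \<Sum>\<gamma>\<in>UNIV. v \<gamma> * pd c (s \<gamma>) x) y"
      unfolding Wl_def nlow_def by simp
    also have "\<dots> = (\<Sum>\<gamma>\<in>UNIV. pd b (\<lambda>x. v \<gamma> * pd c (s \<gamma>) x) y)"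
      by (rule pd_sum) (auto intro: differentiable_mult dd)
    also have "\<dots> = (\<Sum>\<gamma>\<in>UNIV. v \<gamma> * pd b (pd c (s \<gamma>)) y)"
      by (rule sum.cong[OF refl]) (rule pd_cmult[OF dd[unfolded eta_contract_eq]])
    finally show ?thesis .
  qed
  have sw: "pd b (pd c (s \<gamma>)) y = pd c (pd b (s \<gamma>)) y" for \<gamma>
    by (rule pd_swap[OF U defmap_smooth[OF d] y])
  show "nabla g (Wl s v) [] (l @ [b, c]) y = nabla g (Wl s v) [] (l @ [c, b]) y"
    unfolding l0 by (simp add: nabla_Cons0 P sw christoffel_sym[OF m y, of _ b c] LC_Cons)
qed

lemma sum_single:
  assumes "finite S" "a \<in> S" "\<And>y. y \<in> S \<Longrightarrow> y \<noteq> a \<Longrightarrow> f y = 0"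
  shows "sum f S = f a"
proof -
  have "sum f S = f a + sum f (S - {a})" using assms(1,2) by (rule sum.remove)
  also have "sum f (S - {a}) = 0" using assms(3) by (intro sum.neutral) auto
  finally show ?thesis by simp
qed

lemma cnt_replicate: "cnt b (replicate q c) = (if b = c then q else 0)"
  by (induction q) auto

lemma factor:
  fixes W :: "'n::finite \<Rightarrow> real"
  assumes "length cs = q"
  shows "(\<Sum>l\<in>LL q. pw W l * (\<Sum>c\<in>(UNIV::'m::finite set). Fa c (sel True cs l) * Fb c (sel False cs l)))
       = (\<Sum>c\<in>UNIV. (\<Sum>l1\<in>LL (cnt True cs). pw W l1 * Fa c l1) * (\<Sum>l2\<in>LL (cnt False cs). pw W l2 * Fb c l2))"
proof -
  have "(\<Sum>l\<in>LL q. pw W l * (\<Sum>c\<in>(UNIV::'m set). Fa c (sel True cs l) * Fb c (sel False cs l)))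
      = (\<Sum>l\<in>LL q. \<Sum>c\<in>(UNIV::'m set). (pw W (sel True cs l) * Fa c (sel True cs l)) * (pw W (sel False cs l) * Fb c (sel False cs l)))"
  proof (rule sum.cong[OF refl])
    fix l :: "'n list" assume "l \<in> LL q"
    then have "length cs = length l" using assms by (simp add: LL_def)
    then show "pw W l * (\<Sum>c\<in>UNIV. Fa c (sel True cs l) * Fb c (sel False cs l))
      = (\<Sum>c\<in>UNIV. (pw W (sel True cs l) * Fa c (sel True cs l)) * (pw W (sel False cs l) * Fb c (sel False cs l)))"
      by (subst pw_sel[of cs l]) (simp_all add: sum_distrib_left mult_ac)
  qed
  also have "\<dots> = (\<Sum>c\<in>UNIV. \<Sum>l\<in>LL q. (pw W (sel True cs l) * Fa c (sel True cs l)) * (pw W (sel False cs l) * Fb c (sel False cs l)))"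
    by (rule sum.swap)
  also have "\<dots> = (\<Sum>c\<in>UNIV. (\<Sum>l1\<in>LL (cnt True cs). pw W l1 * Fa c l1) * (\<Sum>l2\<in>LL (cnt False cs). pw W l2 * Fb c l2))"
    by (rule sum.cong[OF refl]) (rule sum_LL_sel[OF assms])
  finally show ?thesis .
qed

lemma PT_snoc_F:
  assumes "length cs = length l"
  shows "PT g A B (cs @ [False]) (l @ [b]) x = (\<Sum>c\<in>UNIV. nablas g (cnt True cs) A [c] (sel True cs l) x
           * nablas g (Suc (cnt False cs)) B [] (sel False cs l @ [b, c]) x)"
  unfolding PT_def using assms by (simp add: sel_snoc cnt_snoc)

lemma PT_snoc_T:
  assumes "length cs = length l"
  shows "PT g A B (cs @ [True]) (l @ [b]) x = (\<Sum>c\<in>UNIV. nablas g (Suc (cnt True cs)) A [c] (sel True cs l @ [b]) x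
           * nablas g (cnt False cs) B [] (sel False cs l @ [c]) x)"
  unfolding PT_def using assms by (simp add: sel_snoc cnt_snoc)

context
  fixes U :: "(real^'n::finite) set" and g :: "real^'n \<Rightarrow> 'n \<Rightarrow> 'n \<Rightarrow> real"
    and s :: "'k::finite \<Rightarrow> real^'n \<Rightarrow> real" and \<Lambda> :: "(real^'n) set" and v :: "'k \<Rightarrow> real"
  assumes m: "riem_metric U g" and d: "defining_map U s \<Lambda>"
begin

definition QL :: "real^'n \<Rightarrow> nat \<Rightarrow> 'n \<Rightarrow> real" where
  "QL x p b = (\<Sum>l\<in>LL p. pw (wu g s v x) l * nablas g p (Wl s v) [] (l @ [b]) x)"

definition Qu :: "real^'n \<Rightarrow> nat \<Rightarrow> 'n \<Rightarrow> real" where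
  "Qu x p b = (\<Sum>l\<in>LL p. pw (wu g s v x) l * nablas g p (Wu g s v) [b] l x)"

definition GWt :: "'n tensor" where
  "GWt = (\<lambda>ups ls y. \<Sum>c\<in>UNIV. Wu g s v [c] [] y * Wl s v [] [c] y)"

definition Hq :: "real^'n \<Rightarrow> nat \<Rightarrow> 'n \<Rightarrow> real" where
  "Hq x p b = (\<Sum>l\<in>LL (p - 1). pw (wu g s v x) l * nablas g p GWt [] (l @ [b]) x)"

lemma raiseW: "x \<in> U \<Longrightarrow> length l = k \<Longrightarrow>
   nablas g k (Wu g s v) [c] l x = (\<Sum>e\<in>UNIV. ginv g x c e * nablas g k (Wl s v) [] (l @ [e]) x)"
  by (rule raise[OF m Wu_stens[OF m d] Wl_stens[OF m d] Wu_rel])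

lemma Q_QL: "x \<in> U \<Longrightarrow> Qu x p b = (\<Sum>e\<in>UNIV. ginv g x b e * QL x p e)"
proof -
  assume x: "x \<in> U"
  have "Qu x p b = (\<Sum>l\<in>LL p. pw (wu g s v x) l * (\<Sum>e\<in>UNIV. ginv g x b e * nablas g p (Wl s v) [] (l @ [e]) x))"
    unfolding Qu_def by (rule sum.cong[OF refl]) (simp add: raiseW[OF x] LL_def)
  also have "\<dots> = (\<Sum>e\<in>UNIV. ginv g x b e * QL x p e)"
    unfolding QL_def by (simp add: sum_distrib_left mult_ac) (rule sum.swap)
  finally show ?thesis .
qed

lemma Wl_sym_nablas:
  assumes y: "y \<in> U" and l: "length l = q"
  shows "nablas g (Suc q) (Wl s v) [] (l @ [b, c]) y = nablas g (Suc q) (Wl s v) [] (l @ [c, b]) y"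
proof -
  have "symL U (nablas g q (nabla g (Wl s v))) (0 + q)" by (rule nablas_symL[OF m Wl_symL[OF m d]])
  then show ?thesis unfolding nablas_Suc_right symL_def using y l by simp
qed

lemma K_eq:
  assumes x: "x \<in> U"
  shows "(\<Sum>l\<in>LL q. pw (wu g s v x) l * (\<Sum>c\<in>UNIV. wu g s v x c * nablas g (Suc q) (Wl s v) [] (l @ [b, c]) x))
     = QL x (Suc q) b"
proof -
  have "(\<Sum>l\<in>LL q. pw (wu g s v x) l * (\<Sum>c\<in>UNIV. wu g s v x c * nablas g (Suc q) (Wl s v) [] (l @ [b, c]) x))
      = (\<Sum>l\<in>LL q. \<Sum>c\<in>UNIV. pw (wu g s v x) (l @ [c]) * nablas g (Suc q) (Wl s v) [] ((l @ [c]) @ [b]) x)"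
    by (rule sum.cong[OF refl]) (simp add: sum_distrib_left mult_ac Wl_sym_nablas[OF x, of _ q b] LL_def)
  also have "\<dots> = QL x (Suc q) b"
    unfolding QL_def sum_LL_snoc ..
  finally show ?thesis .
qed

lemma H_eq:
  assumes x: "x \<in> U" and IH: "\<And>i c. 1 \<le> i \<Longrightarrow> i < Suc q \<Longrightarrow> QL x i c = 0"
  shows "Hq x (Suc q) b = 2 * QL x (Suc q) b"
proof -
  let ?W = "wu g s v x" and ?A = "Wu g s v" and ?B = "Wl s v"
  define XF where "XF cs = (\<Sum>l\<in>LL q. pw ?W l * PT g ?A ?B (cs @ [False]) (l @ [b]) x)" for cs
  define XT where "XT cs = (\<Sum>l\<in>LL q. pw ?W l * PT g ?A ?B (cs @ [True]) (l @ [b]) x)" for cs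
  have finq: "finite (LL q :: bool list set)" by (rule finite_LL)
  have H1: "Hq x (Suc q) b = (\<Sum>cs\<in>LL q. XT cs) + (\<Sum>cs\<in>LL q. XF cs)"
  proof -
    have "Hq x (Suc q) b = (\<Sum>l\<in>LL q. pw ?W l * (\<Sum>cs\<in>LL (Suc q). PT g ?A ?B cs (l @ [b]) x))"
      unfolding Hq_def GWt_def diff_Suc_1
      by (rule sum.cong[OF refl]) (subst leibniz[OF m Wu_stens[OF m d] Wl_stens[OF m d] x], auto simp: LL_def)
    also have "\<dots> = (\<Sum>l\<in>LL q. pw ?W l * (\<Sum>cs\<in>LL q. PT g ?A ?B (cs @ [True]) (l @ [b]) x + PT g ?A ?B (cs @ [False]) (l @ [b]) x))"
      unfolding sum_LL_snoc sum_bool ..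
    also have "\<dots> = (\<Sum>cs\<in>LL q. XT cs + XF cs)"
      unfolding XT_def XF_def sum.distrib[symmetric]
      by (simp add: sum_distrib_left distrib_left) (rule sum.swap)
    finally show ?thesis by (simp add: sum.distrib)
  qed
  have XF0: "XF cs = 0" if cs: "cs \<in> LL q" "cs \<noteq> replicate q False" for cs
  proof -
    have len: "length cs = q" using cs by (simp add: LL_def)
    have i1: "1 \<le> cnt True cs" using cnt_zero_iff[OF len, of True] cs(2) by simp
    have iq: "cnt True cs < Suc q" using cnt_sum[of cs] len by simp
    have "XF cs = (\<Sum>c\<in>UNIV. (\<Sum>l1\<in>LL (cnt True cs). pw ?W l1 * nablas g (cnt True cs) ?A [c] l1 x)
          * (\<Sum>l2\<in>LL (cnt False cs). pw ?W l2 * nablas g (Suc (cnt False cs)) ?B [] (l2 @ [b, c]) x))"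
    proof -
      have "XF cs = (\<Sum>l\<in>LL q. pw ?W l * (\<Sum>c\<in>UNIV. nablas g (cnt True cs) ?A [c] (sel True cs l) x
           * nablas g (Suc (cnt False cs)) ?B [] (sel False cs l @ [b, c]) x))"
        unfolding XF_def by (rule sum.cong[OF refl]) (simp add: PT_snoc_F LL_def len)
      then show ?thesis
        using factor[OF len, where W = ?W and Fa = "\<lambda>c l1. nablas g (cnt True cs) ?A [c] l1 x"
              and Fb = "\<lambda>c l2. nablas g (Suc (cnt False cs)) ?B [] (l2 @ [b, c]) x"] by simp
    qed
    also have "\<dots> = 0"
    proof (rule sum.neutral, intro ballI)
      fix c
      have "(\<Sum>l1\<in>LL (cnt True cs). pw ?W l1 * nablas g (cnt True cs) ?A [c] l1 x) = Qu x (cnt True cs) c"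
        unfolding Qu_def ..
      also have "\<dots> = 0" unfolding Q_QL[OF x] using IH[OF i1 iq] by simp
      finally show "(\<Sum>l1\<in>LL (cnt True cs). pw ?W l1 * nablas g (cnt True cs) ?A [c] l1 x)
          * (\<Sum>l2\<in>LL (cnt False cs). pw ?W l2 * nablas g (Suc (cnt False cs)) ?B [] (l2 @ [b, c]) x) = 0" by simp
    qed
    finally show ?thesis .
  qed
  have XT0: "XT cs = 0" if cs: "cs \<in> LL q" "cs \<noteq> replicate q True" for cs
  proof -
    have len: "length cs = q" using cs by (simp add: LL_def)
    have j1: "1 \<le> cnt False cs" using cnt_zero_iff[OF len, of False] cs(2) by simp
    have jq: "cnt False cs < Suc q" using cnt_sum[of cs] len by simp
    have "XT cs = (\<Sum>c\<in>UNIV. (\<Sum>l1\<in>LL (cnt True cs). pw ?W l1 * nablas g (Suc (cnt True cs)) ?A [c] (l1 @ [b]) x)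
          * (\<Sum>l2\<in>LL (cnt False cs). pw ?W l2 * nablas g (cnt False cs) ?B [] (l2 @ [c]) x))"
    proof -
      have "XT cs = (\<Sum>l\<in>LL q. pw ?W l * (\<Sum>c\<in>UNIV. nablas g (Suc (cnt True cs)) ?A [c] (sel True cs l @ [b]) x
           * nablas g (cnt False cs) ?B [] (sel False cs l @ [c]) x))"
        unfolding XT_def by (rule sum.cong[OF refl]) (simp add: PT_snoc_T LL_def len)
      then show ?thesis
        using factor[OF len, where W = ?W and Fa = "\<lambda>c l1. nablas g (Suc (cnt True cs)) ?A [c] (l1 @ [b]) x"
              and Fb = "\<lambda>c l2. nablas g (cnt False cs) ?B [] (l2 @ [c]) x"] by simp
    qed
    also have "\<dots> = 0"
    proof (rule sum.neutral, intro ballI)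
      fix c
      have "(\<Sum>l2\<in>LL (cnt False cs). pw ?W l2 * nablas g (cnt False cs) ?B [] (l2 @ [c]) x) = QL x (cnt False cs) c"
        unfolding QL_def ..
      also have "\<dots> = 0" using IH[OF j1 jq] by simp
      finally show "(\<Sum>l1\<in>LL (cnt True cs). pw ?W l1 * nablas g (Suc (cnt True cs)) ?A [c] (l1 @ [b]) x)
          * (\<Sum>l2\<in>LL (cnt False cs). pw ?W l2 * nablas g (cnt False cs) ?B [] (l2 @ [c]) x) = 0" by simp
    qed
    finally show ?thesis .
  qed
  have rF: "replicate q False \<in> LL q" "replicate q True \<in> LL q" by (simp_all add: LL_def)
  have XFr: "XF (replicate q False) = QL x (Suc q) b"
  proof -
    have "XF (replicate q False) = (\<Sum>l\<in>LL q. pw ?W l * (\<Sum>c\<in>UNIV. wu g s v x c * nablas g (Suc q) ?B [] (l @ [b, c]) x))"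
      unfolding XF_def
      by (rule sum.cong[OF refl]) (simp add: PT_snoc_F LL_def sel_replicate_same sel_replicate_other cnt_replicate)
    then show ?thesis using K_eq[OF x] by simp
  qed
  have XTr: "XT (replicate q True) = QL x (Suc q) b"
  proof -
    have "XT (replicate q True) = (\<Sum>l\<in>LL q. pw ?W l * (\<Sum>c\<in>UNIV. nablas g (Suc q) ?A [c] (l @ [b]) x * wl s v x c))"
      unfolding XT_def
      by (rule sum.cong[OF refl]) (simp add: PT_snoc_T LL_def sel_replicate_same sel_replicate_other cnt_replicate)
    also have "\<dots> = (\<Sum>l\<in>LL q. pw ?W l * (\<Sum>c\<in>UNIV. wu g s v x c * nablas g (Suc q) ?B [] (l @ [b, c]) x))"
    proof (rule sum.cong[OF refl])
      fix l :: "'n list" assume "l \<in> LL q"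
      then have lq: "length (l @ [b]) = Suc q" by (simp add: LL_def)
      have "(\<Sum>c\<in>UNIV. nablas g (Suc q) ?A [c] (l @ [b]) x * wl s v x c)
          = (\<Sum>c\<in>UNIV. \<Sum>e\<in>UNIV. ginv g x c e * nablas g (Suc q) ?B [] (l @ [b, e]) x * wl s v x c)"
        by (simp add: raiseW[OF x lq] sum_distrib_right)
      also have "\<dots> = (\<Sum>e\<in>UNIV. \<Sum>c\<in>UNIV. ginv g x c e * wl s v x c * nablas g (Suc q) ?B [] (l @ [b, e]) x)"
        by (subst sum.swap) (simp add: mult_ac)
      also have "\<dots> = (\<Sum>e\<in>UNIV. wu g s v x e * nablas g (Suc q) ?B [] (l @ [b, e]) x)"
        by (simp add: sum_distrib_right[symmetric] wl_wu[OF m x])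
      finally show "pw ?W l * (\<Sum>c\<in>UNIV. nablas g (Suc q) ?A [c] (l @ [b]) x * wl s v x c)
          = pw ?W l * (\<Sum>c\<in>UNIV. wu g s v x c * nablas g (Suc q) ?B [] (l @ [b, c]) x)" by simp
    qed
    finally show ?thesis using K_eq[OF x] by simp
  qed
  have "(\<Sum>cs\<in>LL q. XF cs) = XF (replicate q False)" by (rule sum_single[OF finq rF(1)]) (rule XF0)
  moreover have "(\<Sum>cs\<in>LL q. XT cs) = XT (replicate q True)" by (rule sum_single[OF finq rF(2)]) (rule XT0)
  ultimately show ?thesis using H1 XFr XTr by simp
qed

end

section \<open>Symmetrization against a product of equal vectors\<close>

definition pm :: "(nat \<Rightarrow> nat) \<Rightarrow> nat \<Rightarrow> 'a list \<Rightarrow> 'a list" where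
  "pm \<sigma> q l = map (\<lambda>i. l ! \<sigma> i) [0..<q]"

lemma pm_nth: "i < q \<Longrightarrow> pm \<sigma> q l ! i = l ! \<sigma> i"
  unfolding pm_def by simp

lemma length_pm[simp]: "length (pm \<sigma> q l) = q"
  unfolding pm_def by simp

lemma pm_inv:
  assumes p: "\<sigma> permutes {..<q}" and l: "length l = q"
  shows "pm (inv \<sigma>) q (pm \<sigma> q l) = l"
proof (rule nth_equalityI)
  show "length (pm (inv \<sigma>) q (pm \<sigma> q l)) = length l" using l by simp
next
  fix i assume "i < length (pm (inv \<sigma>) q (pm \<sigma> q l))"
  then have i: "i < q" by simp
  have "inv \<sigma> i < q" using permutes_in_image[OF permutes_inv[OF p], of i] i by simp
  then show "pm (inv \<sigma>) q (pm \<sigma> q l) ! i = l ! i"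
    using i by (simp add: pm_nth permutes_inverses(1)[OF p])
qed

lemma pm_inv2:
  assumes p: "\<sigma> permutes {..<q}" and l: "length l = q"
  shows "pm \<sigma> q (pm (inv \<sigma>) q l) = l"
  using pm_inv[OF permutes_inv[OF p] l] by (simp add: permutes_inv_inv[OF p])

lemma prod_pm:
  assumes p: "\<sigma> permutes {..<q}"
  shows "(\<Prod>i<q. v (pm \<sigma> q l ! i)) = (\<Prod>i<q. (v (l ! i) :: real))"
proof -
  have "(\<Prod>i<q. v (pm \<sigma> q l ! i)) = (\<Prod>i<q. v (l ! \<sigma> i))" by (simp add: pm_nth)
  also have "\<dots> = (\<Prod>i<q. v (l ! i))"
    using prod.permute[OF p, of "\<lambda>i. v (l ! i)"] by (simp add: o_def)
  finally show ?thesis .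
qed

lemma symmetrize_pm: "length l = q \<Longrightarrow> symmetrize F l = (1 / fact q) * (\<Sum>\<sigma>\<in>{\<sigma>. \<sigma> permutes {..<q}}. F (pm \<sigma> q l))"
  unfolding symmetrize_def pm_def by simp

lemma diag_sym:
  fixes F :: "'k::finite list \<Rightarrow> real"
  shows "(\<Sum>l\<in>LL q. (\<Prod>i<q. v (l ! i)) * symmetrize F l) = (\<Sum>l\<in>LL q. (\<Prod>i<q. v (l ! i)) * F l)"
proof -
  let ?P = "{\<sigma>. \<sigma> permutes {..<q}}"
  have finP: "finite ?P" by (rule finite_permutations) simp
  have cardP: "card ?P = fact q" by (rule card_permutations) simp_all
  have inner: "(\<Sum>l\<in>LL q. (\<Prod>i<q. v (l ! i)) * F (pm \<sigma> q l)) = (\<Sum>l\<in>LL q. (\<Prod>i<q. v (l ! i)) * F l)"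
    if p: "\<sigma> \<in> ?P" for \<sigma>
  proof (rule sum.reindex_bij_witness[where j = "pm \<sigma> q" and i = "pm (inv \<sigma>) q"])
    fix a :: "'k list" assume "a \<in> LL q"
    then show "pm (inv \<sigma>) q (pm \<sigma> q a) = a" using pm_inv p by (simp add: LL_def)
    show "pm \<sigma> q a \<in> LL q" by (simp add: LL_def)
    show "(\<Prod>i<q. v (pm \<sigma> q a ! i)) * F (pm \<sigma> q a) = (\<Prod>i<q. v (a ! i)) * F (pm \<sigma> q a)"
      using prod_pm[of \<sigma> q v a] p by simp
  next
    fix b :: "'k list" assume "b \<in> LL q"
    then show "pm \<sigma> q (pm (inv \<sigma>) q b) = b" using pm_inv2 p by (simp add: LL_def)
    show "pm (inv \<sigma>) q b \<in> LL q" by (simp add: LL_def)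
  qed
  have "(\<Sum>l\<in>LL q. (\<Prod>i<q. v (l ! i)) * symmetrize F l)
      = (\<Sum>l\<in>LL q. (1 / fact q) * (\<Sum>\<sigma>\<in>?P. (\<Prod>i<q. v (l ! i)) * F (pm \<sigma> q l)))"
    by (rule sum.cong[OF refl]) (simp add: symmetrize_pm LL_def sum_distrib_left)
  also have "\<dots> = (\<Sum>l\<in>LL q. \<Sum>\<sigma>\<in>?P. (1 / fact q) * ((\<Prod>i<q. v (l ! i)) * F (pm \<sigma> q l)))"
    by (simp only: sum_distrib_left)
  also have "\<dots> = (\<Sum>\<sigma>\<in>?P. \<Sum>l\<in>LL q. (1 / fact q) * ((\<Prod>i<q. v (l ! i)) * F (pm \<sigma> q l)))"
    by (rule sum.swap)
  also have "\<dots> = (1 / fact q) * (\<Sum>\<sigma>\<in>?P. \<Sum>l\<in>LL q. (\<Prod>i<q. v (l ! i)) * F (pm \<sigma> q l))"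
    by (simp only: sum_distrib_left)
  also have "\<dots> = (1 / fact q) * (\<Sum>\<sigma>\<in>?P. \<Sum>l\<in>LL q. (\<Prod>i<q. v (l ! i)) * F l)"
    using inner by simp
  also have "\<dots> = (\<Sum>l\<in>LL q. (\<Prod>i<q. v (l ! i)) * F l)"
    using cardP by simp
  finally show ?thesis .
qed

section \<open>Polarization\<close>

lemma alt_pow:
  assumes "finite B"
  shows "(\<Sum>T\<in>Pow B. (-1::real) ^ card T) = (if B = {} then 1 else 0)"
  using assms
proof (induction B rule: finite_induct)
  case empty then show ?case by simp
next
  case (insert b B)
  have fin: "finite (Pow B)" using insert.hyps by simp
  have disj: "Pow B \<inter> insert b ` Pow B = {}" using insert.hyps by auto
  have inj: "inj_on (insert b) (Pow B)" using insert.hyps by (auto simp: inj_on_def)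
  have card: "card (insert b T) = Suc (card T)" if "T \<in> Pow B" for T
    using that insert.hyps by (subst card_insert_disjoint) (auto intro: finite_subset)
  have "(\<Sum>T\<in>Pow (insert b B). (-1::real) ^ card T)
      = (\<Sum>T\<in>Pow B. (-1::real) ^ card T) + (\<Sum>T\<in>insert b ` Pow B. (-1::real) ^ card T)"
    unfolding Pow_insert by (rule sum.union_disjoint) (use fin disj in auto)
  also have "(\<Sum>T\<in>insert b ` Pow B. (-1::real) ^ card T) = (\<Sum>T\<in>Pow B. (-1::real) ^ card (insert b T))"
    by (rule sum.reindex[OF inj, unfolded o_def])
  also have "\<dots> = - (\<Sum>T\<in>Pow B. (-1::real) ^ card T)"
    by (simp add: card sum_negf[symmetric])
  finally show ?case by simp
qed

lemma alt_compl:
  assumes "finite B"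
  shows "(\<Sum>T\<in>Pow B. (-1::real) ^ card (B - T)) = (\<Sum>T\<in>Pow B. (-1::real) ^ card T)"
  by (rule sum.reindex_bij_witness[where i = "\<lambda>T. B - T" and j = "\<lambda>T. B - T"]) auto

lemma alt_super:
  assumes A: "finite A" and I: "I \<subseteq> A"
  shows "(\<Sum>S\<in>{S\<in>Pow A. I \<subseteq> S}. (-1::real) ^ card (A - S)) = (if I = A then 1 else 0)"
proof -
  have "(\<Sum>S\<in>{S\<in>Pow A. I \<subseteq> S}. (-1::real) ^ card (A - S)) = (\<Sum>T\<in>Pow (A - I). (-1::real) ^ card ((A - I) - T))"
  proof (rule sum.reindex_bij_witness[where j = "\<lambda>S. S - I" and i = "\<lambda>T. I \<union> T"])
    fix S assume "S \<in> {S\<in>Pow A. I \<subseteq> S}"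
    then have S: "I \<subseteq> S" "S \<subseteq> A" by auto
    then show "I \<union> (S - I) = S" "S - I \<in> Pow (A - I)" by auto
    have "(A - I) - (S - I) = A - S" using S by auto
    then show "(-1::real) ^ card ((A - I) - (S - I)) = (-1) ^ card (A - S)" by simp
  next
    fix T assume "T \<in> Pow (A - I)"
    then show "(I \<union> T) - I = T" "I \<union> T \<in> {S\<in>Pow A. I \<subseteq> S}" using I by auto
  qed
  also have "\<dots> = (if A - I = {} then 1 else 0)"
    using A by (simp add: alt_compl alt_pow)
  also have "(A - I = {}) = (I = A)" using I by auto
  finally show ?thesis .
qed

lemma prod_indicator:
  "finite A \<Longrightarrow> (\<Prod>j\<in>A. (if P j then 1 else 0 :: real)) = (if (\<forall>j\<in>A. P j) then 1 else 0)"
  by (induction A rule: finite_induct) auto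

lemma polar:
  fixes F :: "'k::finite list \<Rightarrow> real"
  assumes H: "\<And>v. (\<Sum>bs\<in>LL q. (\<Prod>i<q. v (bs ! i)) * F bs) = 0" and l: "length as = q"
  shows "symmetrize F as = 0"
proof -
  define A where "A = {..<q}"
  have finA: "finite A" unfolding A_def by simp
  define vS where "vS S b = (\<Sum>i\<in>S. if as ! i = b then 1 else 0 :: real)" for S b
  define G where "G \<sigma> = F (map (\<lambda>j. as ! \<sigma> j) [0..<q])" for \<sigma>
  define w where "w S = (-1::real) ^ card (A - S)" for S
  define PI where "PI = PiE A (\<lambda>_. A)"
  have finPI: "finite PI" unfolding PI_def using finA by (simp add: finite_PiE)
  have step1: "(\<Sum>bs\<in>LL q. (\<Prod>j<q. vS S (bs ! j)) * F bs) = (\<Sum>\<sigma>\<in>PiE A (\<lambda>_. S). G \<sigma>)" if S: "S \<subseteq> A" for S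
  proof -
    have finS: "finite S" using S finA by (rule finite_subset)
    have e1: "(\<Prod>j<q. vS S (bs ! j)) = (\<Sum>\<sigma>\<in>PiE A (\<lambda>_. S). if bs = map (\<lambda>j. as ! \<sigma> j) [0..<q] then 1 else 0)"
      if bs: "bs \<in> LL q" for bs
    proof -
      have "(\<Prod>j<q. vS S (bs ! j)) = (\<Prod>j\<in>A. \<Sum>i\<in>S. if as ! i = bs ! j then 1 else 0)"
        unfolding vS_def A_def ..
      also have "\<dots> = (\<Sum>\<sigma>\<in>PiE A (\<lambda>_. S). \<Prod>j\<in>A. if as ! \<sigma> j = bs ! j then 1 else 0)"
        by (rule prod_sum_PiE) (use finA finS in auto)
      also have "\<dots> = (\<Sum>\<sigma>\<in>PiE A (\<lambda>_. S). if bs = map (\<lambda>j. as ! \<sigma> j) [0..<q] then 1 else 0)"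
      proof (rule sum.cong[OF refl])
        fix \<sigma>
        have "(\<forall>j\<in>A. as ! \<sigma> j = bs ! j) = (bs = map (\<lambda>j. as ! \<sigma> j) [0..<q])"
          using bs unfolding A_def LL_def by (auto simp: list_eq_iff_nth_eq)
        then show "(\<Prod>j\<in>A. if as ! \<sigma> j = bs ! j then 1 else 0 :: real) = (if bs = map (\<lambda>j. as ! \<sigma> j) [0..<q] then 1 else 0)"
          by (simp add: prod_indicator[OF finA])
      qed
      finally show ?thesis .
    qed
    have "(\<Sum>bs\<in>LL q. (\<Prod>j<q. vS S (bs ! j)) * F bs)
        = (\<Sum>bs\<in>LL q. \<Sum>\<sigma>\<in>PiE A (\<lambda>_. S). (if bs = map (\<lambda>j. as ! \<sigma> j) [0..<q] then 1 else 0) * F bs)"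
      by (rule sum.cong[OF refl]) (simp add: e1 sum_distrib_right)
    also have "\<dots> = (\<Sum>\<sigma>\<in>PiE A (\<lambda>_. S). \<Sum>bs\<in>LL q. (if bs = map (\<lambda>j. as ! \<sigma> j) [0..<q] then 1 else 0) * F bs)"
      by (rule sum.swap)
    also have "\<dots> = (\<Sum>\<sigma>\<in>PiE A (\<lambda>_. S). G \<sigma>)"
    proof (rule sum.cong[OF refl])
      fix \<sigma>
      have "map (\<lambda>j. as ! \<sigma> j) [0..<q] \<in> LL q" by (simp add: LL_def)
      moreover have "(\<Sum>bs\<in>LL q. (if bs = map (\<lambda>j. as ! \<sigma> j) [0..<q] then 1 else 0) * F bs)
          = (\<Sum>bs\<in>LL q. if bs = map (\<lambda>j. as ! \<sigma> j) [0..<q] then F bs else 0)"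
        by (rule sum.cong) auto
      ultimately show "(\<Sum>bs\<in>LL q. (if bs = map (\<lambda>j. as ! \<sigma> j) [0..<q] then 1 else 0) * F bs) = G \<sigma>"
        unfolding G_def using sum.delta[OF finite_LL, of "map (\<lambda>j. as ! \<sigma> j) [0..<q]" F] by simp
    qed
    finally show ?thesis .
  qed
  have step3: "(\<Sum>\<sigma>\<in>PiE A (\<lambda>_. S). G \<sigma>) = (\<Sum>\<sigma>\<in>PI. if \<sigma> ` A \<subseteq> S then G \<sigma> else 0)" if S: "S \<subseteq> A" for S
  proof -
    have "PiE A (\<lambda>_. S) = {\<sigma>\<in>PI. \<sigma> ` A \<subseteq> S}" unfolding PI_def using S by (auto simp: PiE_def Pi_def)
    then show ?thesis using finPI by (simp add: sum.inter_filter)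
  qed
  have "0 = (\<Sum>S\<in>Pow A. w S * (\<Sum>bs\<in>LL q. (\<Prod>j<q. vS S (bs ! j)) * F bs))"
    using H by simp
  also have "\<dots> = (\<Sum>S\<in>Pow A. \<Sum>\<sigma>\<in>PI. w S * (if \<sigma> ` A \<subseteq> S then G \<sigma> else 0))"
    by (rule sum.cong[OF refl]) (simp add: step1 step3 sum_distrib_left)
  also have "\<dots> = (\<Sum>\<sigma>\<in>PI. \<Sum>S\<in>Pow A. w S * (if \<sigma> ` A \<subseteq> S then G \<sigma> else 0))"
    by (rule sum.swap)
  also have "\<dots> = (\<Sum>\<sigma>\<in>PI. G \<sigma> * (\<Sum>S\<in>{S\<in>Pow A. \<sigma> ` A \<subseteq> S}. w S))"
  proof (rule sum.cong[OF refl])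
    fix \<sigma>
    have "(\<Sum>S\<in>Pow A. w S * (if \<sigma> ` A \<subseteq> S then G \<sigma> else 0)) = (\<Sum>S\<in>Pow A. if \<sigma> ` A \<subseteq> S then G \<sigma> * w S else 0)"
      by (rule sum.cong) auto
    also have "\<dots> = (\<Sum>S\<in>{S\<in>Pow A. \<sigma> ` A \<subseteq> S}. G \<sigma> * w S)"
      by (rule sum.inter_filter[symmetric]) (simp add: finA)
    finally show "(\<Sum>S\<in>Pow A. w S * (if \<sigma> ` A \<subseteq> S then G \<sigma> else 0)) = G \<sigma> * (\<Sum>S\<in>{S\<in>Pow A. \<sigma> ` A \<subseteq> S}. w S)"
      by (simp add: sum_distrib_left)
  qed
  also have "\<dots> = (\<Sum>\<sigma>\<in>PI. if \<sigma> ` A = A then G \<sigma> else 0)"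
  proof (rule sum.cong[OF refl])
    fix \<sigma> assume "\<sigma> \<in> PI"
    then have sub: "\<sigma> ` A \<subseteq> A" unfolding PI_def by (auto simp: PiE_def Pi_def)
    have "(\<Sum>S\<in>{S\<in>Pow A. \<sigma> ` A \<subseteq> S}. w S) = (if \<sigma> ` A = A then 1 else 0)"
      unfolding w_def by (rule alt_super[OF finA sub])
    then show "G \<sigma> * (\<Sum>S\<in>{S\<in>Pow A. \<sigma> ` A \<subseteq> S}. w S) = (if \<sigma> ` A = A then G \<sigma> else 0)"
      by simp
  qed
  also have "\<dots> = (\<Sum>\<sigma>\<in>{\<sigma>\<in>PI. \<sigma> ` A = A}. G \<sigma>)"
    using finPI by (simp add: sum.inter_filter)
  also have "\<dots> = (\<Sum>\<sigma>\<in>{\<sigma>. \<sigma> permutes A}. G \<sigma>)"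
  proof (rule sum.reindex_bij_witness[where i = "\<lambda>\<sigma>. restrict \<sigma> A" and j = "\<lambda>\<tau> x. if x \<in> A then \<tau> x else x"])
    fix \<tau> assume t: "\<tau> \<in> {\<sigma>\<in>PI. \<sigma> ` A = A}"
    then have tE: "\<tau> \<in> extensional A" unfolding PI_def by (simp add: PiE_def)
    show "restrict (\<lambda>x. if x \<in> A then \<tau> x else x) A = \<tau>"
      using tE by (auto simp: restrict_def extensional_def fun_eq_iff)
    have im: "(\<lambda>x. if x \<in> A then \<tau> x else x) ` A = A" using t by (auto simp: image_def)
    have "inj_on (\<lambda>x. if x \<in> A then \<tau> x else x) A"
      by (rule eq_card_imp_inj_on[OF finA]) (simp only: im)
    then have "bij_betw (\<lambda>x. if x \<in> A then \<tau> x else x) A A" using im by (simp add: bij_betw_def)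
    then show "(\<lambda>x. if x \<in> A then \<tau> x else x) \<in> {\<sigma>. \<sigma> permutes A}"
      by (auto intro: bij_imp_permutes)
    have "map (\<lambda>j. as ! (if j \<in> A then \<tau> j else j)) [0..<q] = map (\<lambda>j. as ! \<tau> j) [0..<q]"
      unfolding A_def by (rule map_cong) auto
    then show "G (\<lambda>x. if x \<in> A then \<tau> x else x) = G \<tau>"
      unfolding G_def by (rule arg_cong[where f = F])
  next
    fix \<sigma> assume "\<sigma> \<in> {\<sigma>. \<sigma> permutes A}"
    then have p: "\<sigma> permutes A" by simp
    show "(\<lambda>x. if x \<in> A then restrict \<sigma> A x else x) = \<sigma>"
      using permutes_not_in[OF p] by (auto simp: fun_eq_iff)
    show "restrict \<sigma> A \<in> {\<sigma>\<in>PI. \<sigma> ` A = A}"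
      unfolding PI_def using permutes_image[OF p] permutes_in_image[OF p] by (auto simp: PiE_def Pi_def)
  qed
  also have "\<dots> = fact q * symmetrize F as"
    unfolding symmetrize_pm[OF l] G_def pm_def A_def by simp
  finally show ?thesis by simp
qed

lemma Gmat_smooth: "riem_metric U g \<Longrightarrow> defining_map U s \<Lambda> \<Longrightarrow> smooth_on U (Gmat g s \<gamma> \<delta>)"
  unfolding Gmat_def[abs_def]
  by (intro smooth_sum[OF metric_open] smooth_mult[OF metric_open] ginv_smooth nlow_smooth) auto

lemma GWt_eq:
  assumes m: "riem_metric U g" and d: "defining_map U s \<Lambda>"
  shows "GWt g s v = (\<lambda>ups ls y. \<Sum>p\<in>UNIV \<times> UNIV. (v (fst p) * v (snd p)) * G_tensor g s (fst p) (snd p) ups ls y)"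
proof -
  have "(\<Sum>c\<in>UNIV. wu g s v y c * wl s v y c) = (\<Sum>p\<in>UNIV \<times> UNIV. (v (fst p) * v (snd p)) * Gmat g s (fst p) (snd p) y)" for y
  proof -
    define f where "f \<gamma> \<delta> c e = v \<gamma> * v \<delta> * (ginv g y c e * nlow s y c \<gamma> * nlow s y e \<delta>)" for \<gamma> \<delta> c e
    have "(\<Sum>c\<in>UNIV. wu g s v y c * wl s v y c) = (\<Sum>c\<in>UNIV. \<Sum>e\<in>UNIV. ginv g y c e * wl s v y e * wl s v y c)"
      by (simp add: wu_wl sum_distrib_right)
    also have "\<dots> = (\<Sum>c\<in>UNIV. \<Sum>e\<in>UNIV. \<Sum>\<delta>\<in>UNIV. \<Sum>\<gamma>\<in>UNIV. f \<gamma> \<delta> c e)"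
      unfolding wl_def f_def by (simp add: sum_distrib_left sum_distrib_right mult_ac)
    also have "\<dots> = (\<Sum>c\<in>UNIV. \<Sum>\<delta>\<in>UNIV. \<Sum>e\<in>UNIV. \<Sum>\<gamma>\<in>UNIV. f \<gamma> \<delta> c e)"
      by (rule sum.cong[OF refl], rule sum.swap)
    also have "\<dots> = (\<Sum>\<delta>\<in>UNIV. \<Sum>c\<in>UNIV. \<Sum>e\<in>UNIV. \<Sum>\<gamma>\<in>UNIV. f \<gamma> \<delta> c e)"
      by (rule sum.swap)
    also have "\<dots> = (\<Sum>\<delta>\<in>UNIV. \<Sum>c\<in>UNIV. \<Sum>\<gamma>\<in>UNIV. \<Sum>e\<in>UNIV. f \<gamma> \<delta> c e)"
      by (rule sum.cong[OF refl], rule sum.cong[OF refl], rule sum.swap)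
    also have "\<dots> = (\<Sum>\<delta>\<in>UNIV. \<Sum>\<gamma>\<in>UNIV. \<Sum>c\<in>UNIV. \<Sum>e\<in>UNIV. f \<gamma> \<delta> c e)"
      by (rule sum.cong[OF refl], rule sum.swap)
    also have "\<dots> = (\<Sum>\<gamma>\<in>UNIV. \<Sum>\<delta>\<in>UNIV. \<Sum>c\<in>UNIV. \<Sum>e\<in>UNIV. f \<gamma> \<delta> c e)"
      by (rule sum.swap)
    also have "\<dots> = (\<Sum>\<gamma>\<in>UNIV. \<Sum>\<delta>\<in>UNIV. v \<gamma> * v \<delta> * Gmat g s \<gamma> \<delta> y)"
      unfolding Gmat_def f_def by (simp add: sum_distrib_left)
    also have "\<dots> = (\<Sum>p\<in>UNIV \<times> UNIV. (v (fst p) * v (snd p)) * Gmat g s (fst p) (snd p) y)"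
      by (simp only: sum.cartesian_product) (simp add: case_prod_beta)
    finally show ?thesis .
  qed
  then show ?thesis by (simp add: GWt_def[OF m d] G_tensor_def fun_eq_iff)
qed

lemma sum_rearr:
  fixes v :: "'k::finite \<Rightarrow> real" and u :: "'n::finite \<Rightarrow> 'k \<Rightarrow> real"
  shows "(\<Sum>l1\<in>LL r. (\<Prod>i<r. v (l1 ! i)) * (\<Sum>as\<in>LL r. (\<Prod>i<r. u (as ! i) (l1 ! i)) * Z as))
       = (\<Sum>as\<in>LL r. (\<Prod>i<r. \<Sum>\<beta>\<in>UNIV. v \<beta> * u (as ! i) \<beta>) * Z as)"
proof -
  have "(\<Sum>l1\<in>LL r. (\<Prod>i<r. v (l1 ! i)) * (\<Sum>as\<in>LL r. (\<Prod>i<r. u (as ! i) (l1 ! i)) * Z as))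
      = (\<Sum>l1\<in>LL r. \<Sum>as\<in>LL r. (\<Prod>i<r. v (l1 ! i) * u (as ! i) (l1 ! i)) * Z as)"
    by (simp add: sum_distrib_left prod.distrib mult_ac)
  also have "\<dots> = (\<Sum>as\<in>LL r. \<Sum>l1\<in>LL r. (\<Prod>i<r. v (l1 ! i) * u (as ! i) (l1 ! i)) * Z as)"
    by (rule sum.swap)
  also have "\<dots> = (\<Sum>as\<in>LL r. (\<Prod>i<r. \<Sum>\<beta>\<in>UNIV. v \<beta> * u (as ! i) \<beta>) * Z as)"
  proof (rule sum.cong[OF refl])
    fix as :: "'n list"
    show "(\<Sum>l1\<in>LL r. (\<Prod>i<r. v (l1 ! i) * u (as ! i) (l1 ! i)) * Z as) = (\<Prod>i<r. \<Sum>\<beta>\<in>UNIV. v \<beta> * u (as ! i) \<beta>) * Z as"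
      using sum_LL_prod[of "\<lambda>i y. v y * u (as ! i) y" r] by (simp add: sum_distrib_right[symmetric])
  qed
  finally show ?thesis .
qed

lemma pd_sqr_zero:
  assumes "f differentiable (at x)" "h differentiable (at x)" "T differentiable (at x)" "f x = 0" "h x = 0"
  shows "pd b (\<lambda>y. f y * h y * T y) x = 0"
proof -
  have d: "(\<lambda>y. f y * h y) differentiable (at x)" using assms by (intro differentiable_mult)
  have "pd b (\<lambda>y. f y * h y * T y) x = pd b (\<lambda>y. f y * h y) x * T x + f x * h x * pd b T x"
    by (rule pd_mult[OF d assms(3)])
  also have "pd b (\<lambda>y. f y * h y) x = pd b f x * h x + f x * pd b h x"
    by (rule pd_mult[OF assms(1,2)])
  finally show ?thesis using assms by simp
qed

lemma defmap_Lambda: "defining_map U s \<Lambda> \<Longrightarrow> x \<in> \<Lambda> \<Longrightarrow> x \<in> U \<and> (\<forall>\<gamma>. s \<gamma> x = 0)"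
  unfolding defining_map_def by blast

lemma pd_Gmat_zero:
  assumes m: "riem_metric U g" and d: "defining_map U s \<Lambda>"
    and Gd: "O_s2 U s (\<lambda>x. Gmat g s \<alpha> \<beta> x - (if \<alpha> = \<beta> then 1 else 0))" and x: "x \<in> \<Lambda>"
  shows "pd b (Gmat g s \<alpha> \<beta>) x = 0"
proof -
  have U: "open U" by (rule metric_open[OF m])
  have xU: "x \<in> U" and sx: "\<And>\<gamma>. s \<gamma> x = 0" using defmap_Lambda[OF d x] by auto
  obtain T where Ts: "\<And>\<gamma> \<delta>. smooth_on U (T \<gamma> \<delta>)"
    and Te: "\<And>y. y \<in> U \<Longrightarrow> Gmat g s \<alpha> \<beta> y - (if \<alpha> = \<beta> then 1 else 0) = (\<Sum>\<gamma>\<in>UNIV. \<Sum>\<delta>\<in>UNIV. s \<gamma> y * s \<delta> y * T \<gamma> \<delta> y)"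
    using Gd unfolding O_s2_def by blast
  have ds: "s \<gamma> differentiable (at x)" for \<gamma> by (rule smooth_diffble[OF defmap_smooth[OF d] xU])
  have dT: "T \<gamma> \<delta> differentiable (at x)" for \<gamma> \<delta> by (rule smooth_diffble[OF Ts xU])
  have d1: "(\<lambda>y. \<Sum>\<delta>\<in>UNIV. s \<gamma> y * s \<delta> y * T \<gamma> \<delta> y) differentiable (at x)" for \<gamma>
    by (rule differentiable_sum, simp, intro ballI differentiable_mult ds dT)
  have d2: "(\<lambda>y. \<Sum>\<gamma>\<in>UNIV. \<Sum>\<delta>\<in>UNIV. s \<gamma> y * s \<delta> y * T \<gamma> \<delta> y) differentiable (at x)"
    by (rule differentiable_sum, simp, intro ballI d1)
  have "pd b (Gmat g s \<alpha> \<beta>) x = pd b (\<lambda>y. (if \<alpha> = \<beta> then 1 else 0) + (\<Sum>\<gamma>\<in>UNIV. \<Sum>\<delta>\<in>UNIV. s \<gamma> y * s \<delta> y * T \<gamma> \<delta> y)) x"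
    by (rule pd_local[OF U xU]) (use Te in \<open>simp add: algebra_simps\<close>)
  also have "\<dots> = pd b (\<lambda>y. (if \<alpha> = \<beta> then 1 else 0)) x + pd b (\<lambda>y. \<Sum>\<gamma>\<in>UNIV. \<Sum>\<delta>\<in>UNIV. s \<gamma> y * s \<delta> y * T \<gamma> \<delta> y) x"
    by (rule pd_add[OF differentiable_const d2])
  also have "pd b (\<lambda>y. \<Sum>\<gamma>\<in>UNIV. \<Sum>\<delta>\<in>UNIV. s \<gamma> y * s \<delta> y * T \<gamma> \<delta> y) x
      = (\<Sum>\<gamma>\<in>UNIV. \<Sum>\<delta>\<in>UNIV. pd b (\<lambda>y. s \<gamma> y * s \<delta> y * T \<gamma> \<delta> y) x)"
    by (subst pd_sum, use d1 in blast, rule sum.cong[OF refl], rule pd_sum, intro differentiable_mult ds dT)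
  also have "\<dots> = 0"
    by (intro sum.neutral ballI pd_sqr_zero ds dT sx)
  finally show ?thesis by (simp add: pd_const)
qed

lemma H1_zero:
  assumes m: "riem_metric U g" and d: "defining_map U s \<Lambda>"
    and Gd: "\<forall>\<alpha> \<beta>. O_s2 U s (\<lambda>x. Gmat g s \<alpha> \<beta> x - (if \<alpha> = \<beta> then 1 else 0))" and x: "x \<in> \<Lambda>"
  shows "Hq g s v x 1 b = 0"
proof -
  have xU: "x \<in> U" using defmap_Lambda[OF d x] by auto
  have dG: "Gmat g s \<gamma> \<delta> differentiable (at x)" for \<gamma> \<delta> by (rule smooth_diffble[OF Gmat_smooth[OF m d] xU])
  have "Hq g s v x 1 b = nablas g 1 (GWt g s v) [] [b] x"
    unfolding Hq_def[OF m d] by (simp add: LL_0)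
  also have "\<dots> = pd b (GWt g s v [] []) x"
    by (simp add: nablas_Suc nabla_Cons0)
  also have "GWt g s v [] [] = (\<lambda>y. \<Sum>p\<in>UNIV \<times> UNIV. (v (fst p) * v (snd p)) * Gmat g s (fst p) (snd p) y)"
    unfolding GWt_eq[OF m d] G_tensor_def ..
  also have "pd b \<dots> x = (\<Sum>p\<in>UNIV \<times> UNIV. (v (fst p) * v (snd p)) * pd b (Gmat g s (fst p) (snd p)) x)"
    by (subst pd_sum) (auto intro!: differentiable_mult dG sum.cong pd_cmult)
  also have "\<dots> = 0"
    using pd_Gmat_zero[OF m d _ x] Gd by simp
  finally show ?thesis .
qed

lemma G_tensor_stens: "riem_metric U g \<Longrightarrow> defining_map U s \<Lambda> \<Longrightarrow> stens U (G_tensor g s \<gamma> \<delta>)"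
  unfolding stens_def G_tensor_def using Gmat_smooth by (metis eta_contract_eq)

lemma nup_tensor_stens: "riem_metric U g \<Longrightarrow> defining_map U s \<Lambda> \<Longrightarrow> stens U (nup_tensor g s \<beta>)"
  unfolding stens_def nup_tensor_def using nup_smooth by blast

lemma prod_snoc1: "length l = r \<Longrightarrow> (\<Prod>i<Suc r. v ((l @ [a]) ! i)) = (\<Prod>i<r. v (l ! i)) * (v a :: real)"
proof -
  assume l: "length l = r"
  have "(\<Prod>i<r. v ((l @ [a]) ! i)) = (\<Prod>i<r. v (l ! i))"
    by (rule prod.cong[OF refl]) (simp add: nth_append l)
  moreover have "(l @ [a]) ! r = a" using l by auto
  ultimately show ?thesis by simp
qed

lemma prod_snoc2: "length l = r \<Longrightarrow> (\<Prod>i<Suc (Suc r). v ((l @ [a, c]) ! i)) = (\<Prod>i<r. v (l ! i)) * v a * (v c :: real)"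
proof -
  assume l: "length l = r"
  have "(\<Prod>i<Suc (Suc r). v ((l @ [a, c]) ! i)) = (\<Prod>i<Suc (Suc r). v (((l @ [a]) @ [c]) ! i))" by simp
  also have "\<dots> = (\<Prod>i<Suc r. v ((l @ [a]) ! i)) * v c" by (rule prod_snoc1) (simp add: l)
  also have "\<dots> = (\<Prod>i<r. v (l ! i)) * v a * v c" unfolding prod_snoc1[OF l] ..
  finally show ?thesis .
qed

lemma nprod_app:
  assumes "length as = r" "length l = r"
  shows "nprod g s x as (l @ ys) = (\<Prod>i<r. nup g s x (as ! i) (l ! i))"
  unfolding nprod_def using assms by (intro prod.cong) (auto simp: nth_append)

lemma pw_wu: "length as = r \<Longrightarrow> (\<Prod>i<r. \<Sum>\<beta>\<in>UNIV. v \<beta> * nup g s x (as ! i) \<beta>) = pw (wu g s v x) as"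
  unfolding pw_nth wu_def by simp

lemma LL_set: "{as. length as = k} = LL k" unfolding LL_def ..

lemma Hp_zero:
  fixes s :: "'k::finite \<Rightarrow> real^'n::finite \<Rightarrow> real"
  assumes m: "riem_metric U g" and d: "defining_map U s \<Lambda>"
    and hyp: "\<forall>x\<in>\<Lambda>. \<forall>b. \<forall>\<alpha>s. length \<alpha>s = p + 1 \<longrightarrow>
         symmetrize (\<lambda>\<beta>s. \<Sum>as\<in>{as::'n list. length as = p - 1}.
             nprod g s x as \<beta>s *
             nablas g p (G_tensor g s (\<beta>s ! (p - 1)) (\<beta>s ! p)) [] (as @ [b]) x) \<alpha>s = 0"
    and p: "p = Suc r" and x: "x \<in> \<Lambda>"
  shows "Hq g s v x p b = 0"
proof -
  have xU: "x \<in> U" using defmap_Lambda[OF d x] by auto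
  define NG where "NG \<gamma> \<delta> as = nablas g p (G_tensor g s \<gamma> \<delta>) [] (as @ [b]) x" for \<gamma> \<delta> as
  define FF where "FF \<beta>s = (\<Sum>as\<in>{as::'n list. length as = p - 1}. nprod g s x as \<beta>s * NG (\<beta>s ! (p - 1)) (\<beta>s ! p) as)" for \<beta>s
  have z: "symmetrize FF \<alpha>s = 0" if "\<alpha>s \<in> LL (Suc (Suc r))" for \<alpha>s
    using hyp x that p unfolding FF_def NG_def LL_def by simp
  have "0 = (\<Sum>\<alpha>s\<in>LL (Suc (Suc r)). (\<Prod>i<Suc (Suc r). v (\<alpha>s ! i)) * symmetrize FF \<alpha>s)"
    using z by simp
  also have "\<dots> = (\<Sum>\<beta>s\<in>LL (Suc (Suc r)). (\<Prod>i<Suc (Suc r). v (\<beta>s ! i)) * FF \<beta>s)"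
    by (rule diag_sym)
  also have "\<dots> = (\<Sum>l1\<in>LL r. \<Sum>\<gamma>\<in>UNIV. \<Sum>\<delta>\<in>UNIV. (\<Prod>i<Suc (Suc r). v ((l1 @ [\<gamma>, \<delta>]) ! i)) * FF (l1 @ [\<gamma>, \<delta>]))"
    unfolding sum_LL_snoc by simp
  also have "\<dots> = (\<Sum>l1\<in>LL r. \<Sum>\<gamma>\<in>UNIV. \<Sum>\<delta>\<in>UNIV. ((\<Prod>i<r. v (l1 ! i)) * v \<gamma> * v \<delta>)
        * (\<Sum>as\<in>LL r. (\<Prod>i<r. nup g s x (as ! i) (l1 ! i)) * NG \<gamma> \<delta> as))"
  proof (rule sum.cong[OF refl])
    fix l1 :: "'k list" assume "l1 \<in> LL r"
    then have l1: "length l1 = r" by (simp add: LL_def)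
    have FFe: "FF (l1 @ [\<gamma>, \<delta>]) = (\<Sum>as\<in>LL r. (\<Prod>i<r. nup g s x (as ! i) (l1 ! i)) * NG \<gamma> \<delta> as)" for \<gamma> \<delta>
      unfolding FF_def p diff_Suc_1 LL_set
      by (rule sum.cong[OF refl]) (simp add: nprod_app[OF _ l1] LL_def nth_append l1)
    show "(\<Sum>\<gamma>\<in>UNIV. \<Sum>\<delta>\<in>UNIV. (\<Prod>i<Suc (Suc r). v ((l1 @ [\<gamma>, \<delta>]) ! i)) * FF (l1 @ [\<gamma>, \<delta>]))
      = (\<Sum>\<gamma>\<in>UNIV. \<Sum>\<delta>\<in>UNIV. ((\<Prod>i<r. v (l1 ! i)) * v \<gamma> * v \<delta>)
        * (\<Sum>as\<in>LL r. (\<Prod>i<r. nup g s x (as ! i) (l1 ! i)) * NG \<gamma> \<delta> as))"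
      by (simp only: prod_snoc2[OF l1] FFe)
  qed
  also have "\<dots> = (\<Sum>l1\<in>LL r. (\<Prod>i<r. v (l1 ! i)) *
        (\<Sum>as\<in>LL r. (\<Prod>i<r. nup g s x (as ! i) (l1 ! i)) * (\<Sum>\<gamma>\<in>UNIV. \<Sum>\<delta>\<in>UNIV. v \<gamma> * v \<delta> * NG \<gamma> \<delta> as)))"
  proof (rule sum.cong[OF refl])
    fix l1 :: "'k list"
    define A where "A = (\<Prod>i<r. v (l1 ! i))"
    define B where "B as = (\<Prod>i<r. nup g s x (as ! i) (l1 ! i))" for as
    have "(\<Sum>\<gamma>\<in>UNIV. \<Sum>\<delta>\<in>UNIV. (A * v \<gamma> * v \<delta>) * (\<Sum>as\<in>LL r. B as * NG \<gamma> \<delta> as))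
        = (\<Sum>\<gamma>\<in>UNIV. \<Sum>\<delta>\<in>UNIV. \<Sum>as\<in>LL r. A * (B as * (v \<gamma> * v \<delta> * NG \<gamma> \<delta> as)))"
      by (simp add: sum_distrib_left mult_ac)
    also have "\<dots> = (\<Sum>\<gamma>\<in>UNIV. \<Sum>as\<in>LL r. \<Sum>\<delta>\<in>UNIV. A * (B as * (v \<gamma> * v \<delta> * NG \<gamma> \<delta> as)))"
      by (rule sum.cong[OF refl], rule sum.swap)
    also have "\<dots> = (\<Sum>as\<in>LL r. \<Sum>\<gamma>\<in>UNIV. \<Sum>\<delta>\<in>UNIV. A * (B as * (v \<gamma> * v \<delta> * NG \<gamma> \<delta> as)))"
      by (rule sum.swap)
    also have "\<dots> = A * (\<Sum>as\<in>LL r. B as * (\<Sum>\<gamma>\<in>UNIV. \<Sum>\<delta>\<in>UNIV. v \<gamma> * v \<delta> * NG \<gamma> \<delta> as))"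
      by (simp add: sum_distrib_left)
    finally show "(\<Sum>\<gamma>\<in>UNIV. \<Sum>\<delta>\<in>UNIV. ((\<Prod>i<r. v (l1 ! i)) * v \<gamma> * v \<delta>)
        * (\<Sum>as\<in>LL r. (\<Prod>i<r. nup g s x (as ! i) (l1 ! i)) * NG \<gamma> \<delta> as))
      = (\<Prod>i<r. v (l1 ! i)) *
        (\<Sum>as\<in>LL r. (\<Prod>i<r. nup g s x (as ! i) (l1 ! i)) * (\<Sum>\<gamma>\<in>UNIV. \<Sum>\<delta>\<in>UNIV. v \<gamma> * v \<delta> * NG \<gamma> \<delta> as))"
      unfolding A_def B_def .
  qed
  also have "\<dots> = (\<Sum>as\<in>LL r. (\<Prod>i<r. \<Sum>\<beta>\<in>UNIV. v \<beta> * nup g s x (as ! i) \<beta>) * (\<Sum>\<gamma>\<in>UNIV. \<Sum>\<delta>\<in>UNIV. v \<gamma> * v \<delta> * NG \<gamma> \<delta> as))"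
    by (rule sum_rearr)
  also have "\<dots> = (\<Sum>as\<in>LL r. pw (wu g s v x) as * nablas g p (GWt g s v) [] (as @ [b]) x)"
  proof (rule sum.cong[OF refl])
    fix as :: "'n list" assume "as \<in> LL r"
    then have las: "length as = r" by (simp add: LL_def)
    have "(\<Sum>\<gamma>\<in>UNIV. \<Sum>\<delta>\<in>UNIV. v \<gamma> * v \<delta> * NG \<gamma> \<delta> as)
        = (\<Sum>q\<in>UNIV \<times> UNIV. (v (fst q) * v (snd q)) * nablas g p (G_tensor g s (fst q) (snd q)) [] (as @ [b]) x)"
      unfolding NG_def by (simp only: sum.cartesian_product) (simp add: case_prod_beta)
    also have "\<dots> = nablas g p (\<lambda>ups ls y. \<Sum>q\<in>UNIV \<times> UNIV. (v (fst q) * v (snd q)) * G_tensor g s (fst q) (snd q) ups ls y) [] (as @ [b]) x"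
      by (rule nablas_lin[OF m _ _ xU, symmetric]) (auto intro: G_tensor_stens[OF m d])
    also have "\<dots> = nablas g p (GWt g s v) [] (as @ [b]) x"
      unfolding GWt_eq[OF m d] ..
    finally show "(\<Prod>i<r. \<Sum>\<beta>\<in>UNIV. v \<beta> * nup g s x (as ! i) \<beta>) * (\<Sum>\<gamma>\<in>UNIV. \<Sum>\<delta>\<in>UNIV. v \<gamma> * v \<delta> * NG \<gamma> \<delta> as)
        = pw (wu g s v x) as * nablas g p (GWt g s v) [] (as @ [b]) x"
      by (simp add: pw_wu[OF las])
  qed
  also have "\<dots> = Hq g s v x p b"
    unfolding Hq_def[OF m d] p diff_Suc_1 ..
  finally show ?thesis by simp
qed

lemma QL_zero:
  fixes s :: "'k::finite \<Rightarrow> real^'n::finite \<Rightarrow> real"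
  assumes m: "riem_metric U g" and d: "defining_map U s \<Lambda>"
    and Gd: "\<forall>\<alpha> \<beta>. O_s2 U s (\<lambda>x. Gmat g s \<alpha> \<beta> x - (if \<alpha> = \<beta> then 1 else 0))"
    and hyp1: "\<forall>n. 2 \<le> n \<and> n \<le> mm \<longrightarrow> (\<forall>x\<in>\<Lambda>. \<forall>b. \<forall>\<alpha>s. length \<alpha>s = n + 1 \<longrightarrow>
         symmetrize (\<lambda>\<beta>s. \<Sum>as\<in>{as::'n list. length as = n - 1}.
             nprod g s x as \<beta>s *
             nablas g n (G_tensor g s (\<beta>s ! (n - 1)) (\<beta>s ! n)) [] (as @ [b]) x) \<alpha>s = 0)"
    and x: "x \<in> \<Lambda>"
  shows "1 \<le> p \<Longrightarrow> p \<le> mm \<Longrightarrow> QL g s v x p c = 0"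
proof (induction p arbitrary: c rule: less_induct)
  case (less p)
  have xU: "x \<in> U" using defmap_Lambda[OF d x] by auto
  obtain q where p: "p = Suc q" using less.prems(1) by (cases p) auto
  have IH: "QL g s v x i c' = 0" if "1 \<le> i" "i < Suc q" for i c'
    using less.IH[of i c'] that less.prems p by simp
  have H: "Hq g s v x (Suc q) c = 2 * QL g s v x (Suc q) c"
    by (rule H_eq[OF m d xU IH])
  have H0: "Hq g s v x p c = 0"
  proof (cases "p = 1")
    case True then show ?thesis using H1_zero[OF m d Gd x] by simp
  next
    case False
    then have "2 \<le> p" using less.prems(1) by simp
    then have hp: "\<forall>x\<in>\<Lambda>. \<forall>b. \<forall>\<alpha>s. length \<alpha>s = p + 1 \<longrightarrow>
         symmetrize (\<lambda>\<beta>s. \<Sum>as\<in>{as::'n list. length as = p - 1}.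
             nprod g s x as \<beta>s *
             nablas g p (G_tensor g s (\<beta>s ! (p - 1)) (\<beta>s ! p)) [] (as @ [b]) x) \<alpha>s = 0"
      using hyp1 less.prems(2) by blast
    show ?thesis by (rule Hp_zero[OF m d hp p x])
  qed
  show ?case using H H0 p by simp
qed

lemma concl_conv:
  fixes s :: "'k::finite \<Rightarrow> real^'n::finite \<Rightarrow> real"
  assumes m: "riem_metric U g" and d: "defining_map U s \<Lambda>" and xU: "x \<in> U"
  shows "(\<Sum>\<beta>s\<in>LL (Suc p). (\<Prod>i<Suc p. v (\<beta>s ! i)) *
           (\<Sum>as\<in>{as::'n list. length as = p}. nprod g s x as \<beta>s * nablas g p (nup_tensor g s (\<beta>s ! p)) [b] as x))
         = Qu g s v x p b"
proof -
  define NU where "NU \<beta> as = nablas g p (nup_tensor g s \<beta>) [b] as x" for \<beta> as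
  have "(\<Sum>\<beta>s\<in>LL (Suc p). (\<Prod>i<Suc p. v (\<beta>s ! i)) *
           (\<Sum>as\<in>{as::'n list. length as = p}. nprod g s x as \<beta>s * nablas g p (nup_tensor g s (\<beta>s ! p)) [b] as x))
      = (\<Sum>l1\<in>LL p. \<Sum>\<beta>\<in>UNIV. (\<Prod>i<Suc p. v ((l1 @ [\<beta>]) ! i)) *
           (\<Sum>as\<in>LL p. nprod g s x as (l1 @ [\<beta>]) * NU ((l1 @ [\<beta>]) ! p) as))"
    unfolding sum_LL_snoc LL_set NU_def ..
  also have "\<dots> = (\<Sum>l1\<in>LL p. \<Sum>\<beta>\<in>UNIV. ((\<Prod>i<p. v (l1 ! i)) * v \<beta>) *
           (\<Sum>as\<in>LL p. (\<Prod>i<p. nup g s x (as ! i) (l1 ! i)) * NU \<beta> as))"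
  proof (rule sum.cong[OF refl], rule sum.cong[OF refl])
    fix l1 :: "'k list" and \<beta> assume "l1 \<in> LL p"
    then have l1: "length l1 = p" by (simp add: LL_def)
    have e: "(l1 @ [\<beta>]) ! p = \<beta>" using l1 by auto
    have "(\<Sum>as\<in>LL p. nprod g s x as (l1 @ [\<beta>]) * NU ((l1 @ [\<beta>]) ! p) as)
        = (\<Sum>as\<in>LL p. (\<Prod>i<p. nup g s x (as ! i) (l1 ! i)) * NU \<beta> as)"
      unfolding e by (rule sum.cong[OF refl]) (simp add: nprod_app[OF _ l1] LL_def)
    then show "(\<Prod>i<Suc p. v ((l1 @ [\<beta>]) ! i)) * (\<Sum>as\<in>LL p. nprod g s x as (l1 @ [\<beta>]) * NU ((l1 @ [\<beta>]) ! p) as)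
        = ((\<Prod>i<p. v (l1 ! i)) * v \<beta>) * (\<Sum>as\<in>LL p. (\<Prod>i<p. nup g s x (as ! i) (l1 ! i)) * NU \<beta> as)"
      unfolding prod_snoc1[OF l1] by simp
  qed
  also have "\<dots> = (\<Sum>l1\<in>LL p. (\<Prod>i<p. v (l1 ! i)) *
           (\<Sum>as\<in>LL p. (\<Prod>i<p. nup g s x (as ! i) (l1 ! i)) * (\<Sum>\<beta>\<in>UNIV. v \<beta> * NU \<beta> as)))"
  proof (rule sum.cong[OF refl])
    fix l1 :: "'k list"
    define A where "A = (\<Prod>i<p. v (l1 ! i))"
    define B where "B as = (\<Prod>i<p. nup g s x (as ! i) (l1 ! i))" for as
    have "(\<Sum>\<beta>\<in>UNIV. (A * v \<beta>) * (\<Sum>as\<in>LL p. B as * NU \<beta> as))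
        = (\<Sum>\<beta>\<in>UNIV. \<Sum>as\<in>LL p. A * (B as * (v \<beta> * NU \<beta> as)))"
      by (rule sum.cong[OF refl]) (simp add: sum_distrib_left mult_ac)
    also have "\<dots> = (\<Sum>as\<in>LL p. \<Sum>\<beta>\<in>UNIV. A * (B as * (v \<beta> * NU \<beta> as)))"
      by (rule sum.swap)
    also have "\<dots> = A * (\<Sum>as\<in>LL p. B as * (\<Sum>\<beta>\<in>UNIV. v \<beta> * NU \<beta> as))"
      by (simp only: sum_distrib_left)
    finally show "(\<Sum>\<beta>\<in>UNIV. ((\<Prod>i<p. v (l1 ! i)) * v \<beta>) * (\<Sum>as\<in>LL p. (\<Prod>i<p. nup g s x (as ! i) (l1 ! i)) * NU \<beta> as))
        = (\<Prod>i<p. v (l1 ! i)) * (\<Sum>as\<in>LL p. (\<Prod>i<p. nup g s x (as ! i) (l1 ! i)) * (\<Sum>\<beta>\<in>UNIV. v \<beta> * NU \<beta> as))"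
      unfolding A_def B_def .
  qed
  also have "\<dots> = (\<Sum>as\<in>LL p. (\<Prod>i<p. \<Sum>\<beta>\<in>UNIV. v \<beta> * nup g s x (as ! i) \<beta>) * (\<Sum>\<beta>\<in>UNIV. v \<beta> * NU \<beta> as))"
    by (rule sum_rearr)
  also have "\<dots> = Qu g s v x p b"
    unfolding Qu_def[OF m d]
  proof (rule sum.cong[OF refl])
    fix as :: "'n list" assume "as \<in> LL p"
    then have las: "length as = p" by (simp add: LL_def)
    have "(\<Sum>\<beta>\<in>UNIV. v \<beta> * NU \<beta> as) = nablas g p (\<lambda>ups ls y. \<Sum>\<beta>\<in>UNIV. v \<beta> * nup_tensor g s \<beta> ups ls y) [b] as x"
      unfolding NU_def by (rule nablas_lin[OF m _ _ xU, symmetric]) (auto intro: nup_tensor_stens[OF m d])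
    also have "(\<lambda>ups ls y. \<Sum>\<beta>\<in>UNIV. v \<beta> * nup_tensor g s \<beta> ups ls y) = Wu g s v"
      by (simp add: fun_eq_iff Wu_def nup_tensor_def)
    finally show "(\<Prod>i<p. \<Sum>\<beta>\<in>UNIV. v \<beta> * nup g s x (as ! i) \<beta>) * (\<Sum>\<beta>\<in>UNIV. v \<beta> * NU \<beta> as)
        = pw (wu g s v x) as * nablas g p (Wu g s v) [b] as x"
      by (simp add: pw_wu[OF las])
  qed
  finally show ?thesis .
qed

theorem mainTheorem12:
  fixes U :: "(real^'n::finite) set"
    and g :: "real^'n \<Rightarrow> 'n \<Rightarrow> 'n \<Rightarrow> real"
    and s :: "'k::finite \<Rightarrow> real^'n \<Rightarrow> real"
    and \<Lambda> :: "(real^'n) set"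
    and m :: nat
  assumes metric: "riem_metric U g"
    and defmap: "defining_map U s \<Lambda>"
    and m2: "m \<ge> 2"
    and G_delta: "\<forall>\<alpha> \<beta>. O_s2 U s (\<lambda>x. Gmat g s \<alpha> \<beta> x - (if \<alpha> = \<beta> then 1 else 0))"
    and hyp1: "\<forall>n. 2 \<le> n \<and> n \<le> m \<longrightarrow> (\<forall>x\<in>\<Lambda>. \<forall>b. \<forall>\<alpha>s. length \<alpha>s = n + 1 \<longrightarrow>
         symmetrize (\<lambda>\<beta>s. \<Sum>as\<in>{as::'n list. length as = n - 1}.
             nprod g s x as \<beta>s *
             nablas g n (G_tensor g s (\<beta>s ! (n - 1)) (\<beta>s ! n)) [] (as @ [b]) x) \<alpha>s = 0)"
    and hyp2: "\<forall>n. 2 \<le> n \<and> n \<le> m \<longrightarrow> (\<forall>x\<in>\<Lambda>. \<forall>\<delta>. \<forall>\<alpha>s. length \<alpha>s = n + 1 \<longrightarrow>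
         symmetrize (\<lambda>\<beta>s. \<Sum>as\<in>{as::'n list. length as = n}.
             nprod g s x as \<beta>s *
             nablas g n (G_tensor g s (\<beta>s ! n) \<delta>) [] as x) \<alpha>s = 0)"
  shows "\<forall>p. 1 \<le> p \<and> p \<le> m \<longrightarrow> (\<forall>x\<in>\<Lambda>. \<forall>b. \<forall>\<alpha>s. length \<alpha>s = p + 1 \<longrightarrow>
         symmetrize (\<lambda>\<beta>s. \<Sum>as\<in>{as::'n list. length as = p}.
             nprod g s x as \<beta>s *
             nablas g p (nup_tensor g s (\<beta>s ! p)) [b] as x) \<alpha>s = 0)"
proof (intro allI impI ballI)
  fix p x b and \<alpha>s :: "'k list"
  assume p: "1 \<le> p \<and> p \<le> m" and x: "x \<in> \<Lambda>" and l: "length \<alpha>s = p + 1"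
  have xU: "x \<in> U" using defmap_Lambda[OF defmap x] by auto
  show "symmetrize (\<lambda>\<beta>s. \<Sum>as\<in>{as::'n list. length as = p}.
             nprod g s x as \<beta>s *
             nablas g p (nup_tensor g s (\<beta>s ! p)) [b] as x) \<alpha>s = 0"
  proof (rule polar[of "Suc p"])
    fix v :: "'k \<Rightarrow> real"
    have "QL g s v x p e = 0" for e
      by (rule QL_zero[OF metric defmap G_delta hyp1 x]) (use p in auto)
    then have "Qu g s v x p b = 0" by (simp add: Q_QL[OF metric defmap xU])
    then show "(\<Sum>bs\<in>LL (Suc p). (\<Prod>i<Suc p. v (bs ! i)) *
           (\<Sum>as\<in>{as::'n list. length as = p}. nprod g s x as bs * nablas g p (nup_tensor g s (bs ! p)) [b] as x)) = 0"
      using concl_conv[OF metric defmap xU] by simp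
  next
    show "length \<alpha>s = Suc p" using l by simp
  qed
qed

end
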